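(* Let $\mathfrak g\xrightarrow{\mu}\mathfrak h$ be a crossed module of Lie algebras, $\phi:W\to V$ linear, $\rho$ a 2-representation on $\phi$, and $r>2$. Then on $C^{p,q}_r(\mathfrak g_1,\phi)$, $$\delta^{(r-1)}\circ\Delta+\Delta\circ\delta^{(r)}=\delta_{(1)}\circ\Delta_2-\Delta_2\circ\delta_{(1)}\qquad\text{and}\qquad\Delta^2=-(\Delta_2\circ\partial+\partial\circ\Delta_2).$$
   Context: Crossed module: Lie algebras $\mathfrak g,\mathfrak h$, Lie homomorphism $\mu$, action $\mathcal L:\mathfrak h\to\mathrm{Der}(\mathfrak g)$ with $\mu(\mathcal L_yx)=[y,\mu(x)]$, $\mathcal L_{\mu(x_0)}x_1=[x_0,x_1]$; $\mathfrak g\oplus_{\mathcal L}\mathfrak h$ has bracket $[(x_0,y_0),(x_1,y_1)]=([x_0,x_1]+\mathcal L_{y_0}x_1-\mathcal L_{y_1}x_0,[y_0,y_1])$. 2-representation: linear $\rho_0^1:\mathfrak h\to\mathfrak{gl}(W)$, $\rho_0^0:\mathfrak h\to\mathfrak{gl}(V)$, $\rho_1:\mathfrak g\to\mathrm{Hom}(V,W)$ with $\rho_0^1,\rho_0^0$ representations, $\phi\rho_0^1(y)=\rho_0^0(y)\phi$, $\rho_1([x_0,x_1])=\rho_1(x_0)\phi\rho_1(x_1)-\rho_1(x_1)\phi\rho_1(x_0)$, $\rho_0^0(\mu(x))=\phi\rho_1(x)$, $\rho_0^1(\mu(x))=\rho_1(x)\phi$, $\rho_1(\mathcal L_yx)=\rho_0^1(y)\rho_1(x)-\rho_1(x)\rho_0^0(y)$.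 $\mathfrak g_0=\mathfrak h$; for $p\ge1$, $\mathfrak g_p=\mathfrak g^p\oplus\mathfrak h$, elements $(x^0,\dots,x^{p-1};y)$, a Lie algebra via identification with composable strings $(a_0,\dots,a_{p-1})\in(\mathfrak g\oplus_{\mathcal L}\mathfrak h)^p$, $a_j=(x^j,y+\sum_{k>j}\mu(x^k))$, componentwise bracket. Face maps $\partial_k:\mathfrak g_{p+1}\to\mathfrak g_p$: $\partial_0(x^0,\dots,x^p;y)=(x^1,\dots,x^p;y)$, $\partial_k(\dots)=(x^0,\dots,x^{k-1}+x^k,\dots,x^p;y)$ ($0<k\le p$), $\partial_{p+1}(\dots)=(x^0,\dots,x^{p-1};y+\mu(x^p))$, componentwise on tuples; $\hat t_p(x^0,\dots,x^{p-1};y)=y+\sum\mu(x^j)$. $X(j),X(m,n)$: removal of entries. $C^{p,q}_r=\bigwedge^q\mathfrak g_p^*\otimes\bigwedge^r\mathfrak g^*\otimes W$ ($r\ge1$), $C^{p,q}_0=\bigwedge^q\mathfrak g_p^*\otimes V$, elements $\omega(\Xi;Z)$. $\delta^{(r)}\omega(\xi_0,\dots,\xi_q;Z)=\sum_j(-1)^j(\rho^{(r)}(\hat t_p(\xi_j))\omega(\Xi(j);\cdot))(Z)+\sum_{m<n}(-1)^{m+n}\omega([\xi_m,\xi_n],\Xi(m,n);Z)$, $(\rho^{(r)}(y)\beta)(x_1,\dots,x_r)=\rho_0^1(y)\beta(x_1,\dots,x_r)-\sum_k\beta(x_1,\dots,\mathcal L_yx_k,\dots,x_r)$. $\partial\omega(\Xi;Z)=\sum_{k=0}^{p+1}(-1)^k\omega(\partial_k\Xi;Z)$.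 $\delta_{(1)}\omega(\Xi;z_0,\dots,z_r)=\sum_k(-1)^k\rho_0^1(\mu(z_k))\omega(\Xi;Z(k))+\sum_{a<b}(-1)^{a+b}\omega(\Xi;[z_a,z_b],Z(a,b))$. $\Delta:C^{p,q}_r\to C^{p+1,q+1}_{r-1}$, $\Delta\omega(\xi_0,\dots,\xi_q;Z)=\sum_j(-1)^j\omega(\partial_0\Xi(j);x_j^0,Z)$ where $\xi_j=(x_j^0,\dots;y_j)$. $\Delta_2:C^{p,q}_r\to C^{p+1,q+2}_{r-2}$, $\Delta_2\omega(\xi_0,\dots,\xi_{q+1};Z)=\sum_{m<n}(-1)^{m+n}\omega(\partial_0\Xi(m,n);x_m^0,x_n^0,Z)$. *)

theory Defs
  imports Main "HOL.Vector_Spaces"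
begin

definition sgn_pow :: "nat \<Rightarrow> 'w::ab_group_add \<Rightarrow> 'w" where
  "sgn_pow j w = (if even j then w else - w)"

definition remove_nth :: "nat \<Rightarrow> 'a list \<Rightarrow> 'a list" where
  "remove_nth j l = take j l @ drop (Suc j) l"

definition remove2 :: "nat \<Rightarrow> nat \<Rightarrow> 'a list \<Rightarrow> 'a list" where
  "remove2 m n l = remove_nth m (remove_nth n l)"  (* X(m,n), for m < n *)

definition lin_family ::
  "('k::field \<Rightarrow> 'a::ab_group_add \<Rightarrow> 'a) \<Rightarrow> ('k \<Rightarrow> 'u::ab_group_add \<Rightarrow> 'u)
   \<Rightarrow> ('k \<Rightarrow> 'x::ab_group_add \<Rightarrow> 'x) \<Rightarrow> ('a \<Rightarrow> 'u \<Rightarrow> 'x) \<Rightarrow> bool" where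
  "lin_family sa su sx F \<longleftrightarrow>
     (\<forall>a. Vector_Spaces.linear su sx (F a)) \<and>
     (\<forall>a a' u. F (a + a') u = F a u + F a' u) \<and>
     (\<forall>c a u. F (sa c a) u = sx c (F a u))"

definition lie_algebra :: "('k::field \<Rightarrow> 'g::ab_group_add \<Rightarrow> 'g) \<Rightarrow> ('g \<Rightarrow> 'g \<Rightarrow> 'g) \<Rightarrow> bool" where
  "lie_algebra s b \<longleftrightarrow> vector_space s \<and> lin_family s s s b \<and>
     (\<forall>x. b x x = 0) \<and>
     (\<forall>x y z. b x (b y z) + b y (b z x) + b z (b x y) = 0)"

definition crossed_module ::
  "('k::field \<Rightarrow> 'g::ab_group_add \<Rightarrow> 'g) \<Rightarrow> ('k \<Rightarrow> 'h::ab_group_add \<Rightarrow> 'h)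
   \<Rightarrow> ('g \<Rightarrow> 'g \<Rightarrow> 'g) \<Rightarrow> ('h \<Rightarrow> 'h \<Rightarrow> 'h) \<Rightarrow> ('g \<Rightarrow> 'h) \<Rightarrow> ('h \<Rightarrow> 'g \<Rightarrow> 'g) \<Rightarrow> bool" where
  "crossed_module sg sh bg bh mu L \<longleftrightarrow>
     lie_algebra sg bg \<and> lie_algebra sh bh \<and>
     Vector_Spaces.linear sg sh mu \<and> (\<forall>x x'. mu (bg x x') = bh (mu x) (mu x')) \<and>
     lin_family sh sg sg L \<and>
     (\<forall>y x x'. L y (bg x x') = bg (L y x) x' + bg x (L y x')) \<and>
     (\<forall>y y' x. L (bh y y') x = L y (L y' x) - L y' (L y x)) \<and>
     (\<forall>y x. mu (L y x) = bh y (mu x)) \<and>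
     (\<forall>x0 x1. L (mu x0) x1 = bg x0 x1)"

definition two_representation ::
  "('k::field \<Rightarrow> 'g::ab_group_add \<Rightarrow> 'g) \<Rightarrow> ('k \<Rightarrow> 'h::ab_group_add \<Rightarrow> 'h)
   \<Rightarrow> ('k \<Rightarrow> 'v::ab_group_add \<Rightarrow> 'v) \<Rightarrow> ('k \<Rightarrow> 'w::ab_group_add \<Rightarrow> 'w)
   \<Rightarrow> ('g \<Rightarrow> 'g \<Rightarrow> 'g) \<Rightarrow> ('h \<Rightarrow> 'h \<Rightarrow> 'h) \<Rightarrow> ('g \<Rightarrow> 'h) \<Rightarrow> ('h \<Rightarrow> 'g \<Rightarrow> 'g)
   \<Rightarrow> ('w \<Rightarrow> 'v) \<Rightarrow> ('h \<Rightarrow> 'w \<Rightarrow> 'w) \<Rightarrow> ('h \<Rightarrow> 'v \<Rightarrow> 'v) \<Rightarrow> ('g \<Rightarrow> 'v \<Rightarrow> 'w) \<Rightarrow> bool" where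
  "two_representation sg sh sv sw bg bh mu L phi rho01 rho00 rho1 \<longleftrightarrow>
     vector_space sv \<and> vector_space sw \<and> Vector_Spaces.linear sw sv phi \<and>
     lin_family sh sw sw rho01 \<and> lin_family sh sv sv rho00 \<and> lin_family sg sv sw rho1 \<and>
     (\<forall>y y' w. rho01 (bh y y') w = rho01 y (rho01 y' w) - rho01 y' (rho01 y w)) \<and>
     (\<forall>y y' v. rho00 (bh y y') v = rho00 y (rho00 y' v) - rho00 y' (rho00 y v)) \<and>
     (\<forall>y w. phi (rho01 y w) = rho00 y (phi w)) \<and>
     (\<forall>x0 x1 v. rho1 (bg x0 x1) v =
         rho1 x0 (phi (rho1 x1 v)) - rho1 x1 (phi (rho1 x0 v))) \<and>
     (\<forall>x v. rho00 (mu x) v = phi (rho1 x v)) \<and>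
     (\<forall>x w. rho01 (mu x) w = rho1 x (phi w)) \<and>
     (\<forall>y x v. rho1 (L y x) v = rho01 y (rho1 x v) - rho1 x (rho00 y v))"

(* An element (x^0,...,x^{p-1}; y) of g_p is represented as the pair (xs, y) with length xs = p;
   g_0 = h corresponds to ([], y). *)

definition gp :: "nat \<Rightarrow> ('g list \<times> 'h) set" where
  "gp p = {\<xi>. length (fst \<xi>) = p}"

definition gp_add :: "('g::ab_group_add list \<times> 'h::ab_group_add) \<Rightarrow> ('g list \<times> 'h) \<Rightarrow> ('g list \<times> 'h)" where
  "gp_add \<xi> \<eta> = (map (\<lambda>(a,b). a + b) (zip (fst \<xi>) (fst \<eta>)), snd \<xi> + snd \<eta>)"

definition gp_scale :: "('k \<Rightarrow> 'g \<Rightarrow> 'g) \<Rightarrow> ('k \<Rightarrow> 'h \<Rightarrow> 'h) \<Rightarrow> 'k \<Rightarrow> ('g list \<times> 'h) \<Rightarrow> ('g list \<times> 'h)" where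
  "gp_scale sg sh c \<xi> = (map (sg c) (fst \<xi>), sh c (snd \<xi>))"

(* h-component of the j-th entry a_j = (x^j, y + sum_{k>j} mu(x^k)) of the composable string *)
definition string_h :: "('g \<Rightarrow> 'h::comm_monoid_add) \<Rightarrow> ('g list \<times> 'h) \<Rightarrow> nat \<Rightarrow> 'h" where
  "string_h mu \<xi> j = snd \<xi> + (\<Sum>k\<in>{j<..<length (fst \<xi>)}. mu (fst \<xi> ! k))"

(* bracket of g_p, via the identification with composable strings in g \<oplus>_L h, componentwise bracket
   [(x0,y0),(x1,y1)] = ([x0,x1] + L_{y0} x1 - L_{y1} x0, [y0,y1]) *)
definition gp_bracket ::
  "('g::ab_group_add \<Rightarrow> 'g \<Rightarrow> 'g) \<Rightarrow> ('h::ab_group_add \<Rightarrow> 'h \<Rightarrow> 'h) \<Rightarrow> ('g \<Rightarrow> 'h) \<Rightarrow> ('h \<Rightarrow> 'g \<Rightarrow> 'g)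
   \<Rightarrow> ('g list \<times> 'h) \<Rightarrow> ('g list \<times> 'h) \<Rightarrow> ('g list \<times> 'h)" where
  "gp_bracket bg bh mu L \<xi> \<eta> =
     (map (\<lambda>j. bg (fst \<xi> ! j) (fst \<eta> ! j) + L (string_h mu \<xi> j) (fst \<eta> ! j)
                 - L (string_h mu \<eta> j) (fst \<xi> ! j)) [0..<length (fst \<xi>)],
      bh (snd \<xi>) (snd \<eta>))"

definition t_hat :: "('g \<Rightarrow> 'h::comm_monoid_add) \<Rightarrow> ('g list \<times> 'h) \<Rightarrow> 'h" where
  "t_hat mu \<xi> = snd \<xi> + (\<Sum>j<length (fst \<xi>). mu (fst \<xi> ! j))"

(* face maps  \<partial>_k : g_{p+1} -> g_p,  0 \<le> k \<le> p+1 *)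
definition face :: "('g::ab_group_add \<Rightarrow> 'h::ab_group_add) \<Rightarrow> nat \<Rightarrow> nat \<Rightarrow> ('g list \<times> 'h) \<Rightarrow> ('g list \<times> 'h)" where
  "face mu p k \<xi> =
     (if k = 0 then (tl (fst \<xi>), snd \<xi>)
      else if k \<le> p then
        (take (k - 1) (fst \<xi>) @ [fst \<xi> ! (k - 1) + fst \<xi> ! k] @ drop (Suc k) (fst \<xi>), snd \<xi>)
      else (take p (fst \<xi>), snd \<xi> + mu (fst \<xi> ! p)))"

(* a cochain omega(\<Xi>; Z) is a function of a list \<Xi> = [\<xi>_0,...] of elements of g_p and a list
   Z = [z_1,...] of elements of g *)

definition alt_multilinear ::
  "('k::field \<Rightarrow> 'a \<Rightarrow> 'a) \<Rightarrow> ('a \<Rightarrow> 'a \<Rightarrow> 'a) \<Rightarrow> 'a set \<Rightarrow> ('k \<Rightarrow> 'w::ab_group_add \<Rightarrow> 'w)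
   \<Rightarrow> nat \<Rightarrow> ('a list \<Rightarrow> 'w) \<Rightarrow> bool" where
  "alt_multilinear sa ad A sw n f \<longleftrightarrow>
     (\<forall>l i a b. length l = n \<and> set l \<subseteq> A \<and> i < n \<and> a \<in> A \<and> b \<in> A \<longrightarrow>
        f (l[i := ad a b]) = f (l[i := a]) + f (l[i := b])) \<and>
     (\<forall>l i c a. length l = n \<and> set l \<subseteq> A \<and> i < n \<and> a \<in> A \<longrightarrow>
        f (l[i := sa c a]) = sw c (f (l[i := a]))) \<and>
     (\<forall>l i j. length l = n \<and> set l \<subseteq> A \<and> i < n \<and> j < n \<and> i \<noteq> j \<and> l ! i = l ! j \<longrightarrow> f l = 0)"

(* C^{p,q}_r = \<wedge>^q g_p^* \<otimes> \<wedge>^r g^* \<otimes> W   (r \<ge> 1) *)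
definition cochain ::
  "('k::field \<Rightarrow> 'g::ab_group_add \<Rightarrow> 'g) \<Rightarrow> ('k \<Rightarrow> 'h::ab_group_add \<Rightarrow> 'h) \<Rightarrow> ('k \<Rightarrow> 'w::ab_group_add \<Rightarrow> 'w)
   \<Rightarrow> nat \<Rightarrow> nat \<Rightarrow> nat \<Rightarrow> (('g list \<times> 'h) list \<Rightarrow> 'g list \<Rightarrow> 'w) \<Rightarrow> bool" where
  "cochain sg sh sw p q r \<omega> \<longleftrightarrow>
     (\<forall>Z. length Z = r \<longrightarrow>
        alt_multilinear (gp_scale sg sh) gp_add (gp p) sw q (\<lambda>\<Xi>. \<omega> \<Xi> Z)) \<and>
     (\<forall>\<Xi>. length \<Xi> = q \<and> set \<Xi> \<subseteq> gp p \<longrightarrow> alt_multilinear sg (+) UNIV sw r (\<omega> \<Xi>))"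

definition rho_r :: "('h \<Rightarrow> 'g \<Rightarrow> 'g) \<Rightarrow> ('h \<Rightarrow> 'w::ab_group_add \<Rightarrow> 'w) \<Rightarrow> 'h \<Rightarrow> ('g list \<Rightarrow> 'w) \<Rightarrow> 'g list \<Rightarrow> 'w" where
  "rho_r L rho01 y \<beta> Z = rho01 y (\<beta> Z) - (\<Sum>k<length Z. \<beta> (Z[k := L y (Z ! k)]))"

(* \<delta>^{(r)} : C^{p,q}_r -> C^{p,q+1}_r *)
definition delta_r ::
  "('g::ab_group_add \<Rightarrow> 'g \<Rightarrow> 'g) \<Rightarrow> ('h::ab_group_add \<Rightarrow> 'h \<Rightarrow> 'h) \<Rightarrow> ('g \<Rightarrow> 'h) \<Rightarrow> ('h \<Rightarrow> 'g \<Rightarrow> 'g)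
   \<Rightarrow> ('h \<Rightarrow> 'w::ab_group_add \<Rightarrow> 'w) \<Rightarrow> (('g list \<times> 'h) list \<Rightarrow> 'g list \<Rightarrow> 'w)
   \<Rightarrow> ('g list \<times> 'h) list \<Rightarrow> 'g list \<Rightarrow> 'w" where
  "delta_r bg bh mu L rho01 \<omega> \<Xi> Z =
     (\<Sum>j<length \<Xi>. sgn_pow j (rho_r L rho01 (t_hat mu (\<Xi> ! j)) (\<omega> (remove_nth j \<Xi>)) Z)) +
     (\<Sum>(m, n)\<in>{(m, n). m < n \<and> n < length \<Xi>}.
        sgn_pow (m + n) (\<omega> (gp_bracket bg bh mu L (\<Xi> ! m) (\<Xi> ! n) # remove2 m n \<Xi>) Z))"

(* \<partial> : C^{p,q}_r -> C^{p+1,q}_r *)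
definition bd ::
  "('g::ab_group_add \<Rightarrow> 'h::ab_group_add) \<Rightarrow> nat \<Rightarrow> (('g list \<times> 'h) list \<Rightarrow> 'g list \<Rightarrow> 'w::ab_group_add)
   \<Rightarrow> ('g list \<times> 'h) list \<Rightarrow> 'g list \<Rightarrow> 'w" where
  "bd mu p \<omega> \<Xi> Z = (\<Sum>k\<le>p + 1. sgn_pow k (\<omega> (map (face mu p k) \<Xi>) Z))"

(* \<delta>_{(1)} : C^{p,q}_r -> C^{p,q}_{r+1} *)
definition delta_1 ::
  "('g::ab_group_add \<Rightarrow> 'g \<Rightarrow> 'g) \<Rightarrow> ('g \<Rightarrow> 'h) \<Rightarrow> ('h \<Rightarrow> 'w::ab_group_add \<Rightarrow> 'w)
   \<Rightarrow> (('g list \<times> 'h) list \<Rightarrow> 'g list \<Rightarrow> 'w) \<Rightarrow> ('g list \<times> 'h) list \<Rightarrow> 'g list \<Rightarrow> 'w" where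
  "delta_1 bg mu rho01 \<omega> \<Xi> Z =
     (\<Sum>k<length Z. sgn_pow k (rho01 (mu (Z ! k)) (\<omega> \<Xi> (remove_nth k Z)))) +
     (\<Sum>(a, b)\<in>{(a, b). a < b \<and> b < length Z}.
        sgn_pow (a + b) (\<omega> \<Xi> (bg (Z ! a) (Z ! b) # remove2 a b Z)))"

(* \<Delta> : C^{p,q}_r -> C^{p+1,q+1}_{r-1};  x_j^0 = first g-entry of \<xi>_j *)
definition Delta ::
  "(('g list \<times> 'h) list \<Rightarrow> 'g list \<Rightarrow> 'w::ab_group_add) \<Rightarrow> ('g list \<times> 'h) list \<Rightarrow> 'g list \<Rightarrow> 'w" where
  "Delta \<omega> \<Xi> Z =
     (\<Sum>j<length \<Xi>. sgn_pow j (\<omega> (map (\<lambda>\<xi>. (tl (fst \<xi>), snd \<xi>)) (remove_nth j \<Xi>))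
                                  (hd (fst (\<Xi> ! j)) # Z)))"

(* \<Delta>_2 : C^{p,q}_r -> C^{p+1,q+2}_{r-2} *)
definition Delta2 ::
  "(('g list \<times> 'h) list \<Rightarrow> 'g list \<Rightarrow> 'w::ab_group_add) \<Rightarrow> ('g list \<times> 'h) list \<Rightarrow> 'g list \<Rightarrow> 'w" where
  "Delta2 \<omega> \<Xi> Z =
     (\<Sum>(m, n)\<in>{(m, n). m < n \<and> n < length \<Xi>}.
        sgn_pow (m + n) (\<omega> (map (\<lambda>\<xi>. (tl (fst \<xi>), snd \<xi>)) (remove2 m n \<Xi>))
                             (hd (fst (\<Xi> ! m)) # hd (fst (\<Xi> ! n)) # Z)))"

end

theory Submission
  imports Defs
begin
lemma sgn_pow_0[simp]: "sgn_pow 0 w = w" by (simp add: sgn_pow_def)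
lemma sgn_pow_Suc[simp]: "sgn_pow (Suc k) w = - sgn_pow k w" by (simp add: sgn_pow_def)
lemma sgn_pow_add[simp]: "sgn_pow k (a + b) = sgn_pow k a + sgn_pow k b" by (simp add: sgn_pow_def)
lemma sgn_pow_minus[simp]: "sgn_pow k (- a) = - sgn_pow k a" by (simp add: sgn_pow_def)
lemma sgn_pow_diff[simp]: "sgn_pow k (a - b) = sgn_pow k a - sgn_pow k b" by (simp add: sgn_pow_def)
lemma sgn_pow_zero[simp]: "sgn_pow k 0 = 0" by (simp add: sgn_pow_def)
lemma sgn_pow_sum: "sgn_pow k (sum f A) = (\<Sum>i\<in>A. sgn_pow k (f i))"
  by (simp add: sgn_pow_def sum_negf)
lemma sgn_pow_plus: "sgn_pow (a + b) w = sgn_pow a (sgn_pow b w)" by (simp add: sgn_pow_def)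
lemma sgn_pow_cancel: "odd (a + b) \<Longrightarrow> sgn_pow a w + sgn_pow b w = 0" by (auto simp add: sgn_pow_def)
lemma sgn_pow_eq: "even (a + b) \<Longrightarrow> sgn_pow a w = sgn_pow b w" by (auto simp add: sgn_pow_def)
lemma sgn_pow_2[simp]: "sgn_pow (Suc (Suc k)) w = sgn_pow k w" by simp
lemma sgn_pow_hom: fixes f :: "'a::ab_group_add \<Rightarrow> 'b::ab_group_add" shows "(\<And>x y. f (x + y) = f x + f y) \<Longrightarrow> f (sgn_pow k w) = sgn_pow k (f w)"
proof -
  assume a: "\<And>x y. f (x + y) = f x + f y"
  have z: "f 0 = 0" using a[of 0 0] by (metis add.right_neutral add_left_cancel)
  have "f (-w) = - f w" using a[of w "-w"] z by (simp add: eq_neg_iff_add_eq_0 add.commute)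
  then show ?thesis by (simp add: sgn_pow_def)
qed
lemma additive_sum: fixes f :: "'a::ab_group_add \<Rightarrow> 'b::ab_group_add" shows "(\<And>x y. f (x + y) = f x + f y) \<Longrightarrow> f (sum g A) = (\<Sum>i\<in>A. f (g i))"
proof -
  assume a: "\<And>x y. f (x + y) = f x + f y"
  have z: "f 0 = 0" using a[of 0 0] by (metis add.right_neutral add_left_cancel)
  show ?thesis
  proof (cases "finite A")
    case True then show ?thesis by (induction A rule: finite_induct) (simp_all add: z a)
  qed (simp add: z)
qed
lemma additive_minus: fixes f :: "'a::ab_group_add \<Rightarrow> 'b::ab_group_add" shows "(\<And>x y. f (x + y) = f x + f y) \<Longrightarrow> f (x - y) = f x - f y"
  by (metis add_diff_cancel diff_add_cancel)

definition sk :: "nat \<Rightarrow> nat \<Rightarrow> nat" where "sk j i = (if i < j then i else Suc i)"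
definition pos :: "nat \<Rightarrow> nat \<Rightarrow> nat" where "pos j v = (if v < j then v else v - 1)"

lemma sk_neq[simp]: "sk j i \<noteq> j" by (simp add: sk_def)
lemma pos_sk[simp]: "pos j (sk j i) = i" by (simp add: sk_def pos_def)
lemma sk_pos[simp]: "v \<noteq> j \<Longrightarrow> sk j (pos j v) = v" by (simp add: sk_def pos_def; arith)
lemma sk_inj[simp]: "(sk j a = sk j b) = (a = b)" by (simp add: sk_def)
lemma sk_less[simp]: "(sk j a < sk j b) = (a < b)" by (simp add: sk_def)
lemma sk_small[simp]: "i < j \<Longrightarrow> sk j i = i" by (simp add: sk_def)
lemma sk_bound: "j < N \<Longrightarrow> (sk j i < N) = (i < N - 1)" by (simp add: sk_def; arith)

lemma sk_image_compl: "sk j ` (- B) = - insert j (sk j ` B)"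
proof (rule set_eqI, rule iffI)
  fix x assume "x \<in> sk j ` (- B)" then show "x \<in> - insert j (sk j ` B)" by auto
next
  fix x assume "x \<in> - insert j (sk j ` B)"
  then have xj: "x \<noteq> j" and "x \<notin> sk j ` B" by auto
  then have "pos j x \<notin> B" by (metis image_eqI sk_pos)
  then show "x \<in> sk j ` (- B)" using sk_pos[OF xj] by (metis ComplI image_eqI)
qed

lemma sk_image_lessThan: "j < N \<Longrightarrow> sk j ` {..<N - 1} = {..<N} - {j}"
proof (rule set_eqI, rule iffI)
  fix x assume "j < N" "x \<in> sk j ` {..<N - 1}" then show "x \<in> {..<N} - {j}" by (auto simp: sk_bound)
next
  fix x assume "j < N" "x \<in> {..<N} - {j}"
  then show "x \<in> sk j ` {..<N - 1}" by (auto simp: sk_bound intro!: image_eqI[where x="pos j x"]) (simp add: pos_def; arith)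
qed

lemma remove_nth_Cons0[simp]: "remove_nth 0 (x # l) = l" by (simp add: remove_nth_def)
lemma remove_nth_Cons_Suc[simp]: "remove_nth (Suc j) (x # l) = x # remove_nth j l" by (simp add: remove_nth_def)
lemma length_remove_nth[simp]: "j < length l \<Longrightarrow> length (remove_nth j l) = length l - 1"
  by (simp add: remove_nth_def)
lemma remove_nth_map: "remove_nth j (map f l) = map f (remove_nth j l)"
  by (simp add: remove_nth_def drop_map take_map)
lemma remove2_map: "remove2 m n (map f l) = map f (remove2 m n l)"
  by (simp add: remove2_def remove_nth_map)
lemma nth_remove_nth: "Suc i < length l \<Longrightarrow> remove_nth j l ! i = l ! sk j i"
  by (auto simp: remove_nth_def sk_def nth_append min_def)
lemma remove_nth_upd: "remove_nth k (l[k := x]) = remove_nth k l"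
  by (simp add: remove_nth_def)

lemma nths_cong_len: "A \<inter> {..<length l} = B \<inter> {..<length l} \<Longrightarrow> nths l A = nths l B"
  unfolding nths_def
proof (rule arg_cong[where f="map fst"], rule filter_cong)
  fix x assume A: "A \<inter> {..<length l} = B \<inter> {..<length l}" and x: "x \<in> set (zip l [0..<length l])"
  from x have "snd x \<in> {..<length l}" by (auto simp: set_zip)
  then show "(snd x \<in> A) = (snd x \<in> B)" using A by blast
qed simp

lemma nths_UNIV[simp]: "nths l UNIV = l" by (simp add: nths_all)
lemma sk_0_Suc[simp]: "sk 0 i = Suc i" by (simp add: sk_def)
lemma sk_Suc_0[simp]: "sk (Suc j) 0 = 0" by (simp add: sk_def)
lemma sk_Suc_Suc[simp]: "sk (Suc j) (Suc i) = Suc (sk j i)" by (simp add: sk_def)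
lemma sk_eq_0: "(sk (Suc j) a = 0) = (a = 0)" by (simp add: sk_def)

lemma remove_nth_nths: "remove_nth j l = nths l (- {j})"
proof (induction l arbitrary: j)
  case Nil then show ?case by (simp add: remove_nth_def)
next
  case (Cons x l)
  then show ?case
  proof (cases j)
    case 0 then show ?thesis by (simp add: nths_Cons)
  next
    case (Suc j') 
    have "{i. Suc i \<in> - {j}} = - {j'}" using Suc by auto
    then show ?thesis using Cons[of j'] Suc by (simp add: nths_Cons)
  qed
qed

lemma nths_remove_nth: "nths (remove_nth j l) A = nths l (sk j ` A)"
proof (induction l arbitrary: j A)
  case Nil then show ?case by (simp add: remove_nth_def)
next
  case (Cons x l)
  show ?case
  proof (cases j)
    case 0
    have "{i. Suc i \<in> sk 0 ` A} = A" by auto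
    moreover have "0 \<notin> sk 0 ` A" by auto
    ultimately show ?thesis using 0 by (simp add: nths_Cons)
  next
    case (Suc j')
    have e: "{i. Suc i \<in> sk (Suc j') ` A} = sk j' ` {i. Suc i \<in> A}"
    proof (rule set_eqI, rule iffI)
      fix i assume "i \<in> {i. Suc i \<in> sk (Suc j') ` A}"
      then obtain a where a: "a \<in> A" "sk (Suc j') a = Suc i" by auto
      then obtain b where b: "a = Suc b" by (cases a) auto
      then show "i \<in> sk j' ` {i. Suc i \<in> A}" using a by auto
    next
      fix i assume "i \<in> sk j' ` {i. Suc i \<in> A}"
      then obtain b where "Suc b \<in> A" "i = sk j' b" by auto
      then show "i \<in> {i. Suc i \<in> sk (Suc j') ` A}" by (auto intro!: image_eqI[where x="Suc b"])
    qed
    have "(0 \<in> sk (Suc j') ` A) = (0 \<in> A)" by (auto simp: sk_eq_0 image_iff)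
    then show ?thesis using Suc Cons[of j'] e by (simp add: nths_Cons)
  qed
qed

lemma rem2_nths: "remove_nth i (remove_nth j l) = nths l (- {j, sk j i})"
  by (simp add: remove_nth_nths[of i] nths_remove_nth sk_image_compl)

lemma rem3_nths: "remove_nth i (remove_nth m (remove_nth n l)) = nths l (- {n, sk n m, sk n (sk m i)})"
  by (simp add: remove_nth_nths[of i] nths_remove_nth sk_image_compl image_insert insert_commute)

lemma length_nths2: "u < N \<Longrightarrow> v < N \<Longrightarrow> u \<noteq> v \<Longrightarrow> length l = N \<Longrightarrow> length (nths l (- {u, v})) = N - 2"
proof -
  assume a: "u < N" "v < N" "u \<noteq> v" "length l = N"
  have "{i. i < length l \<and> i \<in> - {u, v}} = {..<N} - {u, v}" using a by auto
  then show ?thesis using a by (simp add: length_nths card_Diff_subset)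
qed

lemma length_nths3: "u < N \<Longrightarrow> v < N \<Longrightarrow> w < N \<Longrightarrow> u \<noteq> v \<Longrightarrow> u \<noteq> w \<Longrightarrow> v \<noteq> w \<Longrightarrow> length l = N \<Longrightarrow> length (nths l (- {u, v, w})) = N - 3"
proof -
  assume a: "u < N" "v < N" "w < N" "u \<noteq> v" "u \<noteq> w" "v \<noteq> w" "length l = N"
  have "{i. i < length l \<and> i \<in> - {u, v, w}} = {..<N} - {u, v, w}" using a by auto
  then show ?thesis using a by (simp add: length_nths card_Diff_subset)
qed

locale altZ =
  fixes \<omega> :: "'x \<Rightarrow> 'g::ab_group_add list \<Rightarrow> 'w::ab_group_add" and good :: "'x \<Rightarrow> bool" and r :: nat
  assumes add: "good X \<Longrightarrow> length l = r \<Longrightarrow> i < r \<Longrightarrow> \<omega> X (l[i := a + b]) = \<omega> X (l[i := a]) + \<omega> X (l[i := b])"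
    and alt: "good X \<Longrightarrow> length l = r \<Longrightarrow> i < r \<Longrightarrow> j < r \<Longrightarrow> i \<noteq> j \<Longrightarrow> l ! i = l ! j \<Longrightarrow> \<omega> X l = 0"
begin

lemma addP: "good X \<Longrightarrow> length P + Suc (length S) = r \<Longrightarrow>
   \<omega> X (P @ (a + b) # S) = \<omega> X (P @ a # S) + \<omega> X (P @ b # S)"
  using add[of X "P @ a # S" "length P" a b] by simp

lemma hom_slot: "good X \<Longrightarrow> length P + Suc (length S) = r \<Longrightarrow> (\<lambda>a. \<omega> X (P @ a # S)) (x + y) = (\<lambda>a. \<omega> X (P @ a # S)) x + (\<lambda>a. \<omega> X (P @ a # S)) y"
  using addP by simp

lemma zeroP: "good X \<Longrightarrow> length P + Suc (length S) = r \<Longrightarrow> \<omega> X (P @ 0 # S) = 0"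
  using addP[of X P S 0 0] by simp

lemma negP: "good X \<Longrightarrow> length P + Suc (length S) = r \<Longrightarrow> \<omega> X (P @ (- a) # S) = - \<omega> X (P @ a # S)"
  using addP[of X P S a "-a"] zeroP[of X P S] by (simp add: eq_neg_iff_add_eq_0 add.commute)

lemma diffP: "good X \<Longrightarrow> length P + Suc (length S) = r \<Longrightarrow>
   \<omega> X (P @ (a - b) # S) = \<omega> X (P @ a # S) - \<omega> X (P @ b # S)"
  using addP[of X P S a "-b"] negP[of X P S b] by simp

lemma eqP: "good X \<Longrightarrow> length P + Suc (Suc (length S)) = r \<Longrightarrow> \<omega> X (P @ c # c # S) = 0"
  by (rule alt[of X _ "length P" "Suc (length P)"]) (auto simp: nth_append)

lemma swapP: "good X \<Longrightarrow> length P + Suc (Suc (length S)) = r \<Longrightarrow>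
   \<omega> X (P @ a # b # S) = - \<omega> X (P @ b # a # S)"
proof -
  assume g: "good X" and l: "length P + Suc (Suc (length S)) = r"
  have l1: "length (P @ [c]) + Suc (length S) = r" for c using l by simp
  have "0 = \<omega> X (P @ (a + b) # (a + b) # S)" using eqP[OF g l] by simp
  also have "\<dots> = \<omega> X (P @ a # (a + b) # S) + \<omega> X (P @ b # (a + b) # S)"
    using addP[OF g, of P "(a + b) # S" a b] l by simp
  also have "\<dots> = (\<omega> X (P @ a # a # S) + \<omega> X (P @ a # b # S)) + (\<omega> X (P @ b # a # S) + \<omega> X (P @ b # b # S))"
    using addP[OF g l1[of a], of a b] addP[OF g l1[of b], of a b] by simp
  also have "\<dots> = \<omega> X (P @ a # b # S) + \<omega> X (P @ b # a # S)"
    using eqP[OF g l, of a] eqP[OF g l, of b] by simp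
  finally show ?thesis by (simp add: eq_neg_iff_add_eq_0)
qed

lemma moveP: "good X \<Longrightarrow> length P + length l = r \<Longrightarrow> i < length l \<Longrightarrow>
   \<omega> X (P @ l) = sgn_pow i (\<omega> X (P @ (l ! i) # remove_nth i l))"
proof (induction i arbitrary: P l)
  case 0
  then show ?case by (cases l) auto
next
  case (Suc i)
  then obtain x l' where l: "l = x # l'" by (cases l) auto
  have "\<omega> X (P @ l) = \<omega> X ((P @ [x]) @ l')" using l by simp
  also have "\<dots> = sgn_pow i (\<omega> X ((P @ [x]) @ (l' ! i) # remove_nth i l'))"
    using Suc.IH[of "P @ [x]" l'] Suc.prems l by simp
  also have "\<dots> = sgn_pow i (- \<omega> X (P @ (l' ! i) # x # remove_nth i l'))"
    using swapP[OF Suc.prems(1), of P "remove_nth i l'" x "l' ! i"] Suc.prems l by simp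
  finally show ?case using l by simp
qed

lemma move2: "good X \<Longrightarrow> length S + 3 = r \<Longrightarrow> \<omega> X (a # b # c # S) = \<omega> X (c # a # b # S)"
  using moveP[of X "[]" "a # b # c # S" 2] by (simp add: numeral_2_eq_2 remove_nth_def)

lemma moveZ: "good X \<Longrightarrow> length Z + 1 = r \<Longrightarrow> k < length Z \<Longrightarrow>
   \<omega> X (a # Z[k := c]) = - sgn_pow k (\<omega> X (c # a # remove_nth k Z))"
  using moveP[of X "[]" "a # Z[k := c]" "Suc k"] by (simp add: remove_nth_upd)

end

definition PP :: "nat \<Rightarrow> (nat \<times> nat) set" where "PP N = {(m, n). m < n \<and> n < N}"

lemma finite_PP[simp]: "finite (PP N)"
  by (rule finite_subset[of _ "{..<N} \<times> {..<N}"]) (auto simp: PP_def)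

lemma reidx1: "j < N \<Longrightarrow> (\<Sum>i<N - 1. F (sk j i)) = (\<Sum>v\<in>{..<N} - {j}. F v)"
proof -
  assume j: "j < N"
  have "inj_on (sk j) {..<N - 1}" by (auto simp: inj_on_def)
  then have "(\<Sum>v\<in>sk j ` {..<N - 1}. F v) = (\<Sum>i<N - 1. F (sk j i))" by (simp add: sum.reindex)
  then show ?thesis using sk_image_lessThan[OF j] by simp
qed

lemma reidx2: "m < n \<Longrightarrow> n < N \<Longrightarrow> (\<Sum>i<N - 2. F (sk n (sk m i))) = (\<Sum>s\<in>{..<N} - {m, n}. F s)"
proof -
  assume mn: "m < n" "n < N"
  have e: "N - 2 = (N - 1) - 1" by arith
  have "(\<Sum>i<N - 2. F (sk n (sk m i))) = (\<Sum>i<(N - 1) - 1. (\<lambda>c. F (sk n c)) (sk m i))"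
    by (simp only: e)
  also have "\<dots> = (\<Sum>c\<in>{..<N - 1} - {m}. F (sk n c))" using mn by (intro reidx1) simp
  also have "\<dots> = (\<Sum>s\<in>sk n ` ({..<N - 1} - {m}). F s)"
    by (rule sum.reindex[symmetric, unfolded comp_def]) (auto simp: inj_on_def)
  also have "sk n ` ({..<N - 1} - {m}) = {..<N} - {m, n}"
    using mn sk_image_lessThan[of n N] by (auto simp: image_set_diff inj_on_def)
  finally show ?thesis .
qed

lemma PS1: "(\<Sum>(m, n)\<in>PP N. G m n) = (\<Sum>m<N. \<Sum>n\<in>{m<..<N}. G m n)"
proof -
  have "PP N = Sigma {..<N} (\<lambda>m. {m<..<N})" by (auto simp: PP_def)
  then show ?thesis by (simp add: sum.Sigma)
qed

lemma PS2: "(\<Sum>(m, n)\<in>PP N. G m n) = (\<Sum>n<N. \<Sum>m<n. G m n)"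
proof -
  have "(\<Sum>n<N. \<Sum>m<n. G m n) = (\<Sum>n<N. \<Sum>m\<in>{m. m \<in> {..<N} \<and> m < n}. G m n)"
    by (rule sum.cong) (auto intro!: sum.cong)
  also have "\<dots> = (\<Sum>m<N. \<Sum>n\<in>{n. n \<in> {..<N} \<and> m < n}. G m n)"
    by (rule sum.swap_restrict) auto
  also have "\<dots> = (\<Sum>m<N. \<Sum>n\<in>{m<..<N}. G m n)"
    by (rule sum.cong) (auto intro!: sum.cong)
  finally show ?thesis by (simp add: PS1)
qed

lemma pairs: "(\<Sum>u<N. \<Sum>v\<in>{..<N} - {u}. F u v) = (\<Sum>(m, n)\<in>PP N. F m n + F n m)"
proof -
  have "(\<Sum>u<N. \<Sum>v\<in>{..<N} - {u}. F u v) = (\<Sum>u<N. (\<Sum>v<u. F u v) + (\<Sum>v\<in>{u<..<N}. F u v))"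
  proof (rule sum.cong)
    fix u assume "u \<in> {..<N}"
    then have e: "{..<N} - {u} = {..<u} \<union> {u<..<N}" by auto
    show "(\<Sum>v\<in>{..<N} - {u}. F u v) = (\<Sum>v<u. F u v) + (\<Sum>v\<in>{u<..<N}. F u v)"
      unfolding e by (rule sum.union_disjoint) auto
  qed simp
  also have "\<dots> = (\<Sum>(m, n)\<in>PP N. F n m) + (\<Sum>(m, n)\<in>PP N. F m n)"
    unfolding PS2[of "\<lambda>m n. F n m" N] PS1[of F N] by (simp add: sum.distrib)
  finally show ?thesis by (simp add: sum.distrib split_def add.commute)
qed

lemma reidxP: "v < N \<Longrightarrow> (\<Sum>(m', n')\<in>PP (N - 1). F (sk v m') (sk v n')) = (\<Sum>(m, n)\<in>{(m, n)\<in>PP N. m \<noteq> v \<and> n \<noteq> v}. F m n)"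
proof -
  assume v: "v < N"
  let ?h = "\<lambda>(a, b). (sk v a, sk v b)"
  have inj: "inj_on ?h (PP (N - 1))" by (auto simp: inj_on_def)
  have img: "?h ` PP (N - 1) = {(m, n)\<in>PP N. m \<noteq> v \<and> n \<noteq> v}"
  proof (rule set_eqI, rule iffI)
    fix x assume "x \<in> ?h ` PP (N - 1)"
    then show "x \<in> {(m, n)\<in>PP N. m \<noteq> v \<and> n \<noteq> v}" using v by (auto simp: PP_def sk_bound)
  next
    fix x assume x: "x \<in> {(m, n)\<in>PP N. m \<noteq> v \<and> n \<noteq> v}"
    then obtain m n where mn: "x = (m, n)" "m < n" "n < N" "m \<noteq> v" "n \<noteq> v" by (auto simp: PP_def)
    have "pos v m < pos v n" using mn sk_less[of v "pos v m" "pos v n"] by simp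
    moreover have "pos v n < N - 1" using mn v sk_bound[of v N "pos v n"] by simp
    ultimately have "(pos v m, pos v n) \<in> PP (N - 1)" by (simp add: PP_def)
    moreover have "x = ?h (pos v m, pos v n)" using mn by simp
    ultimately show "x \<in> ?h ` PP (N - 1)" by (rule rev_image_eqI)
  qed
  show ?thesis
    using sum.reindex[OF inj, of "\<lambda>(m, n). F m n"] img by (simp add: split_def)
qed

lemma swapT: "(\<Sum>v<N. \<Sum>(m, n)\<in>{(m, n)\<in>PP N. m \<noteq> v \<and> n \<noteq> v}. G v m n)
   = (\<Sum>(m, n)\<in>PP N. \<Sum>v\<in>{..<N} - {m, n}. G v m n)"
proof -
  have "(\<Sum>v<N. \<Sum>(m, n)\<in>{(m, n)\<in>PP N. m \<noteq> v \<and> n \<noteq> v}. G v m n)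
      = (\<Sum>v<N. \<Sum>y\<in>{y. y \<in> PP N \<and> (fst y \<noteq> v \<and> snd y \<noteq> v)}. G v (fst y) (snd y))"
    by (rule sum.cong) (auto simp: split_def intro!: sum.cong)
  also have "\<dots> = (\<Sum>y\<in>PP N. \<Sum>v\<in>{v. v \<in> {..<N} \<and> (fst y \<noteq> v \<and> snd y \<noteq> v)}. G v (fst y) (snd y))"
    by (rule sum.swap_restrict) auto
  also have "\<dots> = (\<Sum>(m, n)\<in>PP N. \<Sum>v\<in>{..<N} - {m, n}. G v m n)"
    by (rule sum.cong) (auto simp: split_def intro!: sum.cong)
  finally show ?thesis .
qed


lemma reidx1s: "j < N \<Longrightarrow> (\<Sum>i<N - 1. sgn_pow i (F (sk j i))) = (\<Sum>v\<in>{..<N} - {j}. sgn_pow (pos j v) (F v))"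
  using reidx1[of j N "\<lambda>v. sgn_pow (pos j v) (F v)"] by simp

lemma sgn_pos_pair: "m < n \<Longrightarrow> sgn_pow m (sgn_pow (pos m n) x) = - sgn_pow (m + n) x"
proof -
  assume "m < n"
  then obtain k where "n = Suc k" "m \<le> k" by (cases n) auto
  then show ?thesis by (simp add: pos_def sgn_pow_plus[symmetric])
qed

lemma sgn_pos_pair2: "m < n \<Longrightarrow> sgn_pow n (sgn_pow (pos n m) x) = sgn_pow (m + n) x"
  by (simp add: pos_def sgn_pow_plus[symmetric] add.commute)

lemma DOUBLE: "(\<Sum>j<N. sgn_pow j (\<Sum>v\<in>{..<N} - {j}. sgn_pow (pos j v) (F j v)))
   = (\<Sum>(m, n)\<in>PP N. sgn_pow (m + n) (F n m - F m n))"
proof -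
  have "(\<Sum>j<N. sgn_pow j (\<Sum>v\<in>{..<N} - {j}. sgn_pow (pos j v) (F j v)))
     = (\<Sum>j<N. \<Sum>v\<in>{..<N} - {j}. sgn_pow j (sgn_pow (pos j v) (F j v)))"
    by (simp add: sgn_pow_sum)
  also have "\<dots> = (\<Sum>(m, n)\<in>PP N. sgn_pow m (sgn_pow (pos m n) (F m n)) + sgn_pow n (sgn_pow (pos n m) (F n m)))"
    by (rule pairs)
  also have "\<dots> = (\<Sum>(m, n)\<in>PP N. sgn_pow (m + n) (F n m - F m n))"
    by (rule sum.cong) (auto simp: PP_def sgn_pos_pair sgn_pos_pair2)
  finally show ?thesis .
qed

lemma DOUBLE': "(\<Sum>j<N. sgn_pow j (\<Sum>i<N - 1. sgn_pow i (F j (sk j i))))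
   = (\<Sum>(m, n)\<in>PP N. sgn_pow (m + n) (F n m - F m n))"
proof -
  have "(\<Sum>j<N. sgn_pow j (\<Sum>i<N - 1. sgn_pow i (F j (sk j i))))
     = (\<Sum>j<N. sgn_pow j (\<Sum>v\<in>{..<N} - {j}. sgn_pow (pos j v) (F j v)))"
  proof (rule sum.cong)
    fix j assume "j \<in> {..<N}"
    then show "sgn_pow j (\<Sum>i<N - 1. sgn_pow i (F j (sk j i))) = sgn_pow j (\<Sum>v\<in>{..<N} - {j}. sgn_pow (pos j v) (F j v))"
      using reidx1s[of j N "F j"] by simp
  qed simp
  then show ?thesis using DOUBLE by simp
qed

definition tlx :: "('g list \<times> 'h) \<Rightarrow> ('g list \<times> 'h)" where "tlx = (\<lambda>\<xi>. (tl (fst \<xi>), snd \<xi>))"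

lemma tlx_simps[simp]: "fst (tlx \<xi>) = tl (fst \<xi>)" "snd (tlx \<xi>) = snd \<xi>" by (simp_all add: tlx_def)

lemma gp_iff[simp]: "(\<xi> \<in> gp p) = (length (fst \<xi>) = p)" by (simp add: gp_def)

lemma nth_gp: "set \<Xi> \<subseteq> gp k \<Longrightarrow> i < length \<Xi> \<Longrightarrow> length (fst (\<Xi> ! i)) = k"
  by (metis gp_iff nth_mem subsetD)

lemma tlx_gp: "\<xi> \<in> gp (Suc p) \<Longrightarrow> tlx \<xi> \<in> gp p" by simp

lemma Delta_eq: "Delta w \<Xi> Y = (\<Sum>j<length \<Xi>. sgn_pow j (w (map tlx (remove_nth j \<Xi>)) (hd (fst (\<Xi> ! j)) # Y)))"
  unfolding Delta_def tlx_def ..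

lemma Delta2_eq: "Delta2 w \<Xi> Y = (\<Sum>(m, n)\<in>PP (length \<Xi>). sgn_pow (m + n) (w (map tlx (remove2 m n \<Xi>)) (hd (fst (\<Xi> ! m)) # hd (fst (\<Xi> ! n)) # Y)))"
  unfolding Delta2_def tlx_def PP_def ..

lemma Delta_rem: "length \<Xi> = N \<Longrightarrow> j < N \<Longrightarrow> Delta w (map tlx (remove_nth j \<Xi>)) Y
   = (\<Sum>i<N - 1. sgn_pow i (w (map tlx (map tlx (nths \<Xi> (- {j, sk j i})))) (hd (tl (fst (\<Xi> ! sk j i))) # Y)))"
proof -
  assume len: "length \<Xi> = N" and j: "j < N"
  have l1: "length (map tlx (remove_nth j \<Xi>)) = N - 1" using len j by simp
  show ?thesis unfolding Delta_eq l1
  proof (rule sum.cong)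
    fix i assume i: "i \<in> {..<N - 1}"
    have e1: "map tlx (remove_nth i (map tlx (remove_nth j \<Xi>))) = map tlx (map tlx (nths \<Xi> (- {j, sk j i})))"
      by (simp only: remove_nth_map rem2_nths)
    have e2: "map tlx (remove_nth j \<Xi>) ! i = tlx (\<Xi> ! sk j i)"
      using i len j l1 by (simp add: nth_remove_nth)
    show "sgn_pow i (w (map tlx (remove_nth i (map tlx (remove_nth j \<Xi>)))) (hd (fst (map tlx (remove_nth j \<Xi>) ! i)) # Y))
       = sgn_pow i (w (map tlx (map tlx (nths \<Xi> (- {j, sk j i})))) (hd (tl (fst (\<Xi> ! sk j i))) # Y))"
      by (simp only: e1 e2 tlx_simps)
  qed simp
qed

lemma set_nths_gp: "set \<Xi> \<subseteq> gp k \<Longrightarrow> set (nths \<Xi> A) \<subseteq> gp k"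
  by (meson set_nths_subset order_trans)

lemma remove2_nths: "m < n \<Longrightarrow> remove2 m n l = nths l (- {m, n})"
  by (simp add: remove2_def rem2_nths insert_commute)

lemma face0: "face mu p 0 \<xi> = tlx \<xi>" by (simp add: face_def tlx_def)

lemma face_tl: assumes "2 \<le> k" "k \<le> p + 2" "length (fst \<xi>) = p + 2"
  shows "tlx (face mu (p + 1) k \<xi>) = face mu p (k - 1) (tlx \<xi>)"
    and "hd (fst (face mu (p + 1) k \<xi>)) = hd (fst \<xi>)"
proof -
  obtain xs y where xi: "\<xi> = (xs, y)" by (cases \<xi>)
  obtain x ys where xs: "xs = x # ys" using assms xi by (cases xs) auto
  obtain k' where k: "k = Suc (Suc k')" using assms by (metis add_2_eq_Suc le_Suc_ex)
  have ly: "length ys = p + 1" using assms xi xs by simp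
  show "tlx (face mu (p + 1) k \<xi>) = face mu p (k - 1) (tlx \<xi>)"
    using assms ly unfolding xi xs k by (auto simp: face_def tlx_def nth_Cons')
  show "hd (fst (face mu (p + 1) k \<xi>)) = hd (fst \<xi>)"
    using assms ly unfolding xi xs k by (auto simp: face_def)
qed

lemma face1: assumes "length (fst \<xi>) = p + 2"
  shows "tlx (face mu (p + 1) 1 \<xi>) = tlx (tlx \<xi>)"
    and "hd (fst (face mu (p + 1) 1 \<xi>)) = hd (fst \<xi>) + hd (tl (fst \<xi>))"
proof -
  obtain xs y where xi: "\<xi> = (xs, y)" by (cases \<xi>)
  obtain x z zs where xs: "xs = x # z # zs" using assms xi by (cases xs; cases "tl xs") auto
  show "tlx (face mu (p + 1) 1 \<xi>) = tlx (tlx \<xi>)" unfolding xi xs by (simp add: face_def tlx_def)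
  show "hd (fst (face mu (p + 1) 1 \<xi>)) = hd (fst \<xi>) + hd (tl (fst \<xi>))" unfolding xi xs by (simp add: face_def)
qed

locale ctx =
  fixes bg :: "'g::ab_group_add \<Rightarrow> 'g \<Rightarrow> 'g" and bh :: "'h::ab_group_add \<Rightarrow> 'h \<Rightarrow> 'h"
    and mu :: "'g \<Rightarrow> 'h" and L :: "'h \<Rightarrow> 'g \<Rightarrow> 'g" and rho01 :: "'h \<Rightarrow> 'w::ab_group_add \<Rightarrow> 'w"
    and \<omega> :: "('g list \<times> 'h) list \<Rightarrow> 'g list \<Rightarrow> 'w" and p q r :: nat
  assumes Ladd: "L (y + y') x = L y x + L y' x"
    and Lmu: "L (mu x0) x1 = bg x0 x1"
    and Radd1: "rho01 (y + y') w = rho01 y w + rho01 y' w"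
    and Radd2: "rho01 y (w + w') = rho01 y w + rho01 y w'"
    and Wadd: "length \<Xi> = q \<Longrightarrow> set \<Xi> \<subseteq> gp p \<Longrightarrow> length l = r \<Longrightarrow> i < r \<Longrightarrow>
               \<omega> \<Xi> (l[i := a + b]) = \<omega> \<Xi> (l[i := a]) + \<omega> \<Xi> (l[i := b])"
    and Walt: "length \<Xi> = q \<Longrightarrow> set \<Xi> \<subseteq> gp p \<Longrightarrow> length l = r \<Longrightarrow> i < r \<Longrightarrow> j < r \<Longrightarrow> i \<noteq> j \<Longrightarrow> l ! i = l ! j \<Longrightarrow> \<omega> \<Xi> l = 0"
    and r2: "2 < r"
begin

definition good :: "('g list \<times> 'h) list \<Rightarrow> bool" where "good \<Xi> \<longleftrightarrow> length \<Xi> = q \<and> set \<Xi> \<subseteq> gp p"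

sublocale W: altZ \<omega> good r
  by unfold_locales (auto simp: good_def intro: Wadd Walt)

lemma good_RR: assumes "length \<Xi> = q + 2" "set \<Xi> \<subseteq> gp (p + 2)" "m < n" "n < q + 2"
  shows "good (map tlx (map tlx (nths \<Xi> (- {m, n}))))"
proof -
  have "length (nths \<Xi> (- {m, n})) = q" using length_nths2[of m "q+2" n \<Xi>] assms by simp
  moreover have "set (nths \<Xi> (- {m, n})) \<subseteq> gp (p + 2)" using assms set_nths_gp by blast
  ultimately show ?thesis by (auto simp: good_def)
qed

lemma second_pair:
  assumes len: "length \<Xi> = q + 2" and gp: "set \<Xi> \<subseteq> gp (p + 2)" and lz: "length Z = r - 2"
    and mn: "m < n" "n < q + 2"
  shows "sgn_pow (m + n) (\<omega> (map tlx (map tlx (nths \<Xi> (- {m, n})))) (hd (tl (fst (\<Xi> ! m))) # hd (fst (\<Xi> ! n)) # Z)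
            - \<omega> (map tlx (map tlx (nths \<Xi> (- {m, n})))) (hd (tl (fst (\<Xi> ! n))) # hd (fst (\<Xi> ! m)) # Z))
   = - (sgn_pow (m + n) (bd mu p \<omega> (map tlx (remove2 m n \<Xi>)) (hd (fst (\<Xi> ! m)) # hd (fst (\<Xi> ! n)) # Z))
        + (\<Sum>k\<le>p + 2. sgn_pow k (sgn_pow (m + n) (\<omega> (map tlx (remove2 m n (map (face mu (p + 1) k) \<Xi>)))
              (hd (fst (map (face mu (p + 1) k) \<Xi> ! m)) # hd (fst (map (face mu (p + 1) k) \<Xi> ! n)) # Z)))))"
proof -
  define E where "E = nths \<Xi> (- {m, n})"
  define RR where "RR = map tlx (map tlx E)"
  define am where "am = hd (fst (\<Xi> ! m))"
  define an where "an = hd (fst (\<Xi> ! n))"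
  define bm where "bm = hd (tl (fst (\<Xi> ! m)))"
  define bn where "bn = hd (tl (fst (\<Xi> ! n)))"
  define s where "s = m + n"
  have rem: "remove2 m n \<Xi> = E" using mn by (simp add: E_def remove2_nths)
  have remf: "remove2 m n (map f \<Xi>) = map f E" for f using rem by (simp add: remove2_map)
  have Egp: "\<forall>\<xi>\<in>set E. length (fst \<xi>) = p + 2"
  proof
    fix \<xi> assume "\<xi> \<in> set E"
    then have "\<xi> \<in> gp (p + 2)" using set_nths_gp[OF gp] unfolding E_def by blast
    then show "length (fst \<xi>) = p + 2" by (simp only: gp_iff)
  qed
  have lm: "length (fst (\<Xi> ! m)) = p + 2" "length (fst (\<Xi> ! n)) = p + 2" using nth_gp[OF gp] mn len by auto
  have g: "good RR" unfolding RR_def E_def using good_RR[OF len gp mn] .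
  have lz2: "length Z + 2 = r" using lz r2 by simp
  have B: "bd mu p \<omega> (map tlx E) (am # an # Z)
      = \<omega> RR (am # an # Z) + (\<Sum>k\<le>p. sgn_pow (Suc k) (\<omega> (map (face mu p (Suc k)) (map tlx E)) (am # an # Z)))"
    unfolding bd_def Suc_eq_plus1[symmetric] sum.atMost_Suc_shift by (simp add: face0[abs_def] RR_def)
  have fk: "map tlx (map (face mu (p + 1) (Suc (Suc k))) E) = map (face mu p (Suc k)) (map tlx E)" if "k \<le> p" for k
    using that Egp face_tl(1)[of "Suc (Suc k)" p] by (auto intro!: map_cong)
  have hk: "hd (fst (face mu (p + 1) (Suc (Suc k)) (\<Xi> ! v))) = hd (fst (\<Xi> ! v))" if "k \<le> p" "length (fst (\<Xi> ! v)) = p + 2" for k v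
    using that face_tl(2)[of "Suc (Suc k)" p "\<Xi> ! v" mu] by simp
  have f1: "map tlx (map (face mu (p + 1) 1) E) = RR"
    using Egp face1(1)[of _ p mu] unfolding RR_def by (auto intro!: map_cong)
  have f0: "map tlx (map (face mu (p + 1) 0) E) = RR"
    unfolding RR_def by (simp add: face0[abs_def])
  have p2: "p + 2 = Suc (Suc p)" by simp
  have C: "(\<Sum>k\<le>p + 2. sgn_pow k (sgn_pow s (\<omega> (map tlx (remove2 m n (map (face mu (p + 1) k) \<Xi>)))
              (hd (fst (map (face mu (p + 1) k) \<Xi> ! m)) # hd (fst (map (face mu (p + 1) k) \<Xi> ! n)) # Z))))
     = sgn_pow s (\<omega> RR (bm # bn # Z)) - sgn_pow s (\<omega> RR ((am + bm) # (an + bn) # Z))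
       + (\<Sum>k\<le>p. sgn_pow k (sgn_pow s (\<omega> (map (face mu p (Suc k)) (map tlx E)) (am # an # Z))))"
  proof -
    have "(\<Sum>k\<le>p + 2. sgn_pow k (sgn_pow s (\<omega> (map tlx (remove2 m n (map (face mu (p + 1) k) \<Xi>)))
              (hd (fst (map (face mu (p + 1) k) \<Xi> ! m)) # hd (fst (map (face mu (p + 1) k) \<Xi> ! n)) # Z))))
       = (\<Sum>k\<le>p + 2. sgn_pow k (sgn_pow s (\<omega> (map tlx (map (face mu (p + 1) k) E))
              (hd (fst (face mu (p + 1) k (\<Xi> ! m))) # hd (fst (face mu (p + 1) k (\<Xi> ! n))) # Z))))"
      using mn len by (simp add: remf)
    also have "\<dots> = sgn_pow s (\<omega> RR (bm # bn # Z)) - sgn_pow s (\<omega> RR ((am + bm) # (an + bn) # Z))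
       + (\<Sum>k\<le>p. sgn_pow k (sgn_pow s (\<omega> (map (face mu p (Suc k)) (map tlx E)) (am # an # Z))))"
    proof -
      define F where "F = (\<lambda>k. sgn_pow k (sgn_pow s (\<omega> (map tlx (map (face mu (p + 1) k) E))
              (hd (fst (face mu (p + 1) k (\<Xi> ! m))) # hd (fst (face mu (p + 1) k (\<Xi> ! n))) # Z))))"
      have "(\<Sum>k\<le>p + 2. F k) = F 0 + (F 1 + (\<Sum>k\<le>p. F (Suc (Suc k))))"
        by (simp only: p2 sum.atMost_Suc_shift One_nat_def)
      moreover have "F 0 = sgn_pow s (\<omega> RR (bm # bn # Z))"
        unfolding F_def f0 by (simp add: face0 bm_def bn_def)
      moreover have "F 1 = - sgn_pow s (\<omega> RR ((am + bm) # (an + bn) # Z))"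
        unfolding F_def f1 using face1(2)[OF lm(1), of mu] face1(2)[OF lm(2), of mu] by (simp add: am_def an_def bm_def bn_def)
      moreover have "(\<Sum>k\<le>p. F (Suc (Suc k))) = (\<Sum>k\<le>p. sgn_pow k (sgn_pow s (\<omega> (map (face mu p (Suc k)) (map tlx E)) (am # an # Z))))"
      proof (rule sum.cong)
        fix k assume "k \<in> {..p}" then have k: "k \<le> p" by simp
        show "F (Suc (Suc k)) = sgn_pow k (sgn_pow s (\<omega> (map (face mu p (Suc k)) (map tlx E)) (am # an # Z)))"
          unfolding F_def by (simp only: fk[OF k] hk[OF k lm(1)] hk[OF k lm(2)] am_def an_def sgn_pow_2)
      qed simp
      ultimately show ?thesis unfolding F_def by simp
    qed
    finally show ?thesis .
  qed
  have comm: "sgn_pow a (sgn_pow b x) = sgn_pow b (sgn_pow a x)" for a b and x :: 'w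
    by (simp add: sgn_pow_plus[symmetric] add.commute)
  have cancel: "sgn_pow s (\<Sum>k\<le>p. sgn_pow (Suc k) (T k)) + (\<Sum>k\<le>p. sgn_pow k (sgn_pow s (T k))) = 0" for T :: "nat \<Rightarrow> 'w"
    by (simp add: sgn_pow_sum sum.distrib[symmetric] comm sum_negf)
  have exp: "\<omega> RR ((am + bm) # (an + bn) # Z) = \<omega> RR (am # an # Z) + \<omega> RR (am # bn # Z) + \<omega> RR (bm # an # Z) + \<omega> RR (bm # bn # Z)"
    using W.addP[OF g, of "[]" "(an + bn) # Z" am bm] W.addP[OF g, of "[am]" Z an bn] W.addP[OF g, of "[bm]" Z an bn] lz2
    by simp
  have sw: "\<omega> RR (am # bn # Z) = - \<omega> RR (bn # am # Z)"
    using W.swapP[OF g, of "[]" Z am bn] lz2 by simp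
  define T where "T = (\<lambda>k. \<omega> (map (face mu p (Suc k)) (map tlx E)) (am # an # Z))"
  have c: "sgn_pow s (\<Sum>k\<le>p. sgn_pow (Suc k) (T k)) = - (\<Sum>k\<le>p. sgn_pow k (sgn_pow s (T k)))"
    using cancel[of T] by (simp add: eq_neg_iff_add_eq_0)
  have X: "sgn_pow s (\<omega> RR (bm # an # Z) - \<omega> RR (bn # am # Z))
     = - (sgn_pow s (\<omega> RR (am # an # Z) + (\<Sum>k\<le>p. sgn_pow (Suc k) (T k)))
          + (sgn_pow s (\<omega> RR (bm # bn # Z)) - sgn_pow s (\<omega> RR ((am + bm) # (an + bn) # Z))
             + (\<Sum>k\<le>p. sgn_pow k (sgn_pow s (T k)))))"
    unfolding sgn_pow_add c exp sw by (simp add: algebra_simps)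
  show ?thesis
    unfolding rem am_def[symmetric] an_def[symmetric] bm_def[symmetric] bn_def[symmetric] s_def[symmetric]
      E_def[symmetric] RR_def[symmetric]
    apply (subst B, subst C)
    using X unfolding T_def .
qed

theorem second:
  assumes len: "length \<Xi> = q + 2" and gp: "set \<Xi> \<subseteq> gp (p + 2)" and lz: "length Z = r - 2"
  shows "Delta (Delta \<omega>) \<Xi> Z = - (Delta2 (bd mu p \<omega>) \<Xi> Z + bd mu (p + 1) (Delta2 \<omega>) \<Xi> Z)"
proof -
  let ?N = "q + 2"
  let ?R = "\<lambda>m n. map tlx (map tlx (nths \<Xi> (- {m, n})))"
  let ?a = "\<lambda>v. hd (fst (\<Xi> ! v))"
  let ?b = "\<lambda>v. hd (tl (fst (\<Xi> ! v)))"
  have "Delta (Delta \<omega>) \<Xi> Z = (\<Sum>j<?N. sgn_pow j (\<Sum>i<?N - 1. sgn_pow i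
            ((\<lambda>u v. \<omega> (?R u v) (?b v # ?a u # Z)) j (sk j i))))"
    unfolding Delta_eq[of "Delta \<omega>"] len
    by (rule sum.cong) (simp_all add: Delta_rem[OF len])
  also have "\<dots> = (\<Sum>(m, n)\<in>PP ?N. sgn_pow (m + n) (\<omega> (?R m n) (?b m # ?a n # Z) - \<omega> (?R m n) (?b n # ?a m # Z)))"
    by (subst DOUBLE') (simp add: insert_commute)
  finally have L: "Delta (Delta \<omega>) \<Xi> Z = \<dots>" .
  have R1: "Delta2 (bd mu p \<omega>) \<Xi> Z = (\<Sum>(m, n)\<in>PP ?N. sgn_pow (m + n) (bd mu p \<omega> (map tlx (remove2 m n \<Xi>)) (?a m # ?a n # Z)))"
    unfolding Delta2_eq len ..
  have R2: "bd mu (p + 1) (Delta2 \<omega>) \<Xi> Z = (\<Sum>(m, n)\<in>PP ?N. \<Sum>k\<le>p + 2. sgn_pow k (sgn_pow (m + n) (\<omega> (map tlx (remove2 m n (map (face mu (p + 1) k) \<Xi>)))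
              (hd (fst (map (face mu (p + 1) k) \<Xi> ! m)) # hd (fst (map (face mu (p + 1) k) \<Xi> ! n)) # Z))))"
    unfolding bd_def Delta2_eq length_map len sgn_pow_sum
    by (subst sum.swap) (simp add: split_def add.assoc)
  show ?thesis
    unfolding L R1 R2 sum.distrib[symmetric] sum_negf[symmetric]
  proof (rule sum.cong)
    fix x assume "x \<in> PP ?N"
    then obtain m n where x: "x = (m, n)" "m < n" "n < ?N" by (auto simp: PP_def)
    show "(case x of (m, n) \<Rightarrow> sgn_pow (m + n) (\<omega> (?R m n) (?b m # ?a n # Z) - \<omega> (?R m n) (?b n # ?a m # Z)))
      = - ((case x of (m, n) \<Rightarrow> sgn_pow (m + n) (bd mu p \<omega> (map tlx (remove2 m n \<Xi>)) (?a m # ?a n # Z)))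
         + (case x of (m, n) \<Rightarrow> \<Sum>k\<le>p + 2. sgn_pow k (sgn_pow (m + n) (\<omega> (map tlx (remove2 m n (map (face mu (p + 1) k) \<Xi>)))
              (hd (fst (map (face mu (p + 1) k) \<Xi> ! m)) # hd (fst (map (face mu (p + 1) k) \<Xi> ! n)) # Z)))))"
      unfolding x(1) prod.case by (rule second_pair[OF len gp lz x(2,3)])
  qed simp
qed

end

lemma Delta_rem0: "length \<Xi> = N \<Longrightarrow> j < N \<Longrightarrow> Delta w (remove_nth j \<Xi>) Y
   = (\<Sum>i<N - 1. sgn_pow i (w (map tlx (nths \<Xi> (- {j, sk j i}))) (hd (fst (\<Xi> ! sk j i)) # Y)))"
proof -
  assume len: "length \<Xi> = N" and j: "j < N"
  have l1: "length (remove_nth j \<Xi>) = N - 1" using len j by simp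
  show ?thesis unfolding Delta_eq l1
  proof (rule sum.cong)
    fix i assume i: "i \<in> {..<N - 1}"
    have e1: "map tlx (remove_nth i (remove_nth j \<Xi>)) = map tlx (nths \<Xi> (- {j, sk j i}))"
      by (simp only: rem2_nths)
    have e2: "remove_nth j \<Xi> ! i = \<Xi> ! sk j i"
      using i len j l1 by (simp add: nth_remove_nth)
    show "sgn_pow i (w (map tlx (remove_nth i (remove_nth j \<Xi>))) (hd (fst (remove_nth j \<Xi> ! i)) # Y))
       = sgn_pow i (w (map tlx (nths \<Xi> (- {j, sk j i}))) (hd (fst (\<Xi> ! sk j i)) # Y))"
      by (simp only: e1 e2)
  qed simp
qed

lemma sum_Suc_ivl: "(\<Sum>k\<in>{Suc j<..<Suc n}. f k) = (\<Sum>k\<in>{j<..<n}. f (Suc k))"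
proof -
  have "{Suc j<..<Suc n} = Suc ` {j<..<n}"
  proof (rule set_eqI, rule iffI)
    fix x assume "x \<in> {Suc j<..<Suc n}"
    then obtain y where "x = Suc y" "y \<in> {j<..<n}" by (cases x) auto
    then show "x \<in> Suc ` {j<..<n}" by blast
  qed auto
  then show ?thesis by (simp add: sum.reindex)
qed

lemma sum_0_ivl: "(\<Sum>k\<in>{0<..<Suc n}. f k) = (\<Sum>k<n. f (Suc k))"
proof -
  have "{0<..<Suc n} = Suc ` {..<n}"
  proof (rule set_eqI, rule iffI)
    fix x assume "x \<in> {0<..<Suc n}"
    then obtain y where "x = Suc y" "y \<in> {..<n}" by (cases x) auto
    then show "x \<in> Suc ` {..<n}" by blast
  qed auto
  then show ?thesis by (simp add: sum.reindex)
qed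

lemma string_h0: "length (fst \<xi>) = Suc n \<Longrightarrow> string_h mu \<xi> 0 = t_hat mu (tlx \<xi>)"
proof -
  assume l: "length (fst \<xi>) = Suc n"
  then obtain x xs where "fst \<xi> = x # xs" by (cases "fst \<xi>") auto
  then show ?thesis using l by (simp add: string_h_def t_hat_def sum_0_ivl)
qed

lemma string_hS: "length (fst \<xi>) = Suc n \<Longrightarrow> string_h mu \<xi> (Suc j) = string_h mu (tlx \<xi>) j"
proof -
  assume l: "length (fst \<xi>) = Suc n"
  then obtain x xs where "fst \<xi> = x # xs" by (cases "fst \<xi>") auto
  then show ?thesis using l by (simp add: string_h_def sum_Suc_ivl)
qed

lemma t_hat_split: "length (fst \<xi>) = Suc n \<Longrightarrow> t_hat mu \<xi> = t_hat mu (tlx \<xi>) + mu (hd (fst \<xi>))"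
proof -
  assume l: "length (fst \<xi>) = Suc n"
  then obtain x xs where "fst \<xi> = x # xs" by (cases "fst \<xi>") auto
  then show ?thesis using l by (simp add: t_hat_def sum.lessThan_Suc_shift add_ac del: sum.lessThan_Suc)
qed

lemma br_len[simp]: "length (fst (gp_bracket bg bh mu L \<xi> \<eta>)) = length (fst \<xi>)"
  by (simp add: gp_bracket_def)

lemma br_hd: "length (fst \<xi>) = Suc n \<Longrightarrow> length (fst \<eta>) = Suc n \<Longrightarrow>
  hd (fst (gp_bracket bg bh mu L \<xi> \<eta>)) = bg (hd (fst \<xi>)) (hd (fst \<eta>)) + L (t_hat mu (tlx \<xi>)) (hd (fst \<eta>)) - L (t_hat mu (tlx \<eta>)) (hd (fst \<xi>))"
proof -
  assume l1: "length (fst \<xi>) = Suc n" and l2: "length (fst \<eta>) = Suc n"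
  have ne: "fst \<xi> \<noteq> []" "fst \<eta> \<noteq> []" using l1 l2 by auto
  show ?thesis using l1 l2
    by (simp add: gp_bracket_def upt_conv_Cons string_h0 hd_conv_nth[OF ne(1)] hd_conv_nth[OF ne(2)] del: upt_Suc)
qed

lemma br_tl: "length (fst \<xi>) = Suc n \<Longrightarrow> length (fst \<eta>) = Suc n \<Longrightarrow>
  tlx (gp_bracket bg bh mu L \<xi> \<eta>) = gp_bracket bg bh mu L (tlx \<xi>) (tlx \<eta>)"
proof -
  assume l1: "length (fst \<xi>) = Suc n" and l2: "length (fst \<eta>) = Suc n"
  have f: "fst (tlx (gp_bracket bg bh mu L \<xi> \<eta>)) = fst (gp_bracket bg bh mu L (tlx \<xi>) (tlx \<eta>))"
    by (rule nth_equalityI) (simp_all add: l1 l2 gp_bracket_def nth_tl string_hS[OF l1] string_hS[OF l2] del: upt_Suc)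
  have s: "snd (tlx (gp_bracket bg bh mu L \<xi> \<eta>)) = snd (gp_bracket bg bh mu L (tlx \<xi>) (tlx \<eta>))"
    by (simp add: gp_bracket_def)
  show ?thesis using f s by (rule prod_eqI)
qed

lemma map_tlx_gp: "set \<Xi> \<subseteq> gp (Suc k) \<Longrightarrow> set (map tlx \<Xi>) \<subseteq> gp k"
  by auto

lemma delta_r_eq: "delta_r bg bh mu L rho01 w H Y =
   (\<Sum>j<length H. sgn_pow j (rho_r L rho01 (t_hat mu (H ! j)) (w (remove_nth j H)) Y)) +
   (\<Sum>(m, n)\<in>PP (length H). sgn_pow (m + n) (w (gp_bracket bg bh mu L (H ! m) (H ! n) # remove2 m n H) Y))"
  unfolding delta_r_def PP_def ..

lemma parity3: "m < n \<Longrightarrow> s \<noteq> m \<Longrightarrow> s \<noteq> n \<Longrightarrow> odd ((m + n + Suc (pos m (pos n s))) + (s + (pos s m + pos s n)))"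
  unfolding pos_def by (cases "s < m"; cases "s < n"; simp; presburger)

lemma T_cancel: "(\<Sum>(m, n)\<in>PP N. sgn_pow (m + n) (\<Sum>s\<in>{..<N} - {m, n}. sgn_pow (Suc (pos m (pos n s))) (G m n s)))
   + (\<Sum>(m, n)\<in>PP N. \<Sum>v\<in>{..<N} - {m, n}. sgn_pow v (sgn_pow (pos v m + pos v n) (G m n v))) = 0"
  unfolding sum.distrib[symmetric]
proof (rule sum.neutral, rule ballI)
  fix x assume "x \<in> PP N"
  then obtain m n where x: "x = (m, n)" "m < n" by (auto simp: PP_def)
  show "(case x of (m, n) \<Rightarrow> sgn_pow (m + n) (\<Sum>s\<in>{..<N} - {m, n}. sgn_pow (Suc (pos m (pos n s))) (G m n s)))
      + (case x of (m, n) \<Rightarrow> \<Sum>v\<in>{..<N} - {m, n}. sgn_pow v (sgn_pow (pos v m + pos v n) (G m n v))) = 0"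
    unfolding x(1) prod.case sgn_pow_sum sum.distrib[symmetric]
  proof (rule sum.neutral, rule ballI)
    fix s assume "s \<in> {..<N} - {m, n}"
    then have "s \<noteq> m" "s \<noteq> n" by auto
    then show "sgn_pow (m + n) (sgn_pow (Suc (pos m (pos n s))) (G m n s)) + sgn_pow s (sgn_pow (pos s m + pos s n) (G m n s)) = 0"
      unfolding sgn_pow_plus[symmetric] using parity3[OF x(2)] by (intro sgn_pow_cancel) simp
  qed
qed

lemma delta_1_eq: "delta_1 bg mu rho01 w X Y =
   (\<Sum>k<length Y. sgn_pow k (rho01 (mu (Y ! k)) (w X (remove_nth k Y)))) +
   (\<Sum>(a, b)\<in>PP (length Y). sgn_pow (a + b) (w X (bg (Y ! a) (Y ! b) # remove2 a b Y)))"
  unfolding delta_1_def PP_def ..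

lemma sgn_comm: "sgn_pow a (sgn_pow b x) = sgn_pow b (sgn_pow a x)"
  by (simp add: sgn_pow_plus[symmetric] add.commute)

context ctx begin

lemma rho_hom: "(\<lambda>w. rho01 y w) (a + b) = (\<lambda>w. rho01 y w) a + (\<lambda>w. rho01 y w) b"
  by (simp add: Radd2)

lemma rho_sum: "rho01 y (sum f A) = (\<Sum>i\<in>A. rho01 y (f i))"
  using additive_sum[of "rho01 y"] Radd2 by blast

lemma rho_sgn: "rho01 y (sgn_pow k w) = sgn_pow k (rho01 y w)"
  using sgn_pow_hom[of "rho01 y"] Radd2 by blast

lemma rho_diff: "rho01 y (a - b) = rho01 y a - rho01 y b"
  using additive_minus[of "rho01 y"] Radd2 by blast

lemma rho_diff1: "rho01 (y - y') w = rho01 y w - rho01 y' w"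
  using additive_minus[of "\<lambda>y. rho01 y w"] Radd1 by blast

lemma L_diff1: "L (y - y') x = L y x - L y' x"
  using additive_minus[of "\<lambda>y. L y x"] Ladd by blast

lemma slotk: "good R \<Longrightarrow> length Z + 1 = r \<Longrightarrow> k < length Z \<Longrightarrow>
  \<omega> R (y # Z[k := a + b]) = \<omega> R (y # Z[k := a]) + \<omega> R (y # Z[k := b])"
  using W.add[of R "y # Z" "Suc k" a b] by simp

lemma delta1_pair: assumes g: "good R" and lz: "length Z + 1 = r"
  shows "delta_1 bg mu rho01 \<omega> R (x # y # Z) =
     rho01 (mu x) (\<omega> R (y # Z)) - rho01 (mu y) (\<omega> R (x # Z))
     + (\<Sum>k<length Z. sgn_pow k (rho01 (mu (Z ! k)) (\<omega> R (x # y # remove_nth k Z))))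
     - \<omega> R (bg x y # Z)
     + (\<Sum>b<length Z. sgn_pow b (\<omega> R (bg x (Z ! b) # y # remove_nth b Z)))
     - (\<Sum>b<length Z. sgn_pow b (\<omega> R (bg y (Z ! b) # x # remove_nth b Z)))
     + (\<Sum>(a, b)\<in>PP (length Z). sgn_pow (a + b) (\<omega> R (x # y # bg (Z ! a) (Z ! b) # remove2 a b Z)))"
proof -
  let ?L = "x # y # Z"
  have S1: "(\<Sum>k<length ?L. sgn_pow k (rho01 (mu (?L ! k)) (\<omega> R (remove_nth k ?L))))
     = rho01 (mu x) (\<omega> R (y # Z)) - rho01 (mu y) (\<omega> R (x # Z))
     + (\<Sum>k<length Z. sgn_pow k (rho01 (mu (Z ! k)) (\<omega> R (x # y # remove_nth k Z))))"
    by (simp add: sum.lessThan_Suc_shift del: sum.lessThan_Suc)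
  define F where "F = (\<lambda>a b. sgn_pow (a + b) (\<omega> R (bg (?L ! a) (?L ! b) # remove2 a b ?L)))"
  have S2: "(\<Sum>(a, b)\<in>PP (length ?L). F a b) = (\<Sum>b<Suc (Suc (length Z)). \<Sum>a<b. F a b)"
    by (simp only: PS2 length_Cons)
  also have "\<dots> = F 0 1 + (\<Sum>b<length Z. F 0 (Suc (Suc b)) + F 1 (Suc (Suc b)) + (\<Sum>a<b. F (Suc (Suc a)) (Suc (Suc b))))"
    by (simp add: sum.lessThan_Suc_shift add.assoc del: sum.lessThan_Suc)
  also have "\<dots> = - \<omega> R (bg x y # Z)
     + ((\<Sum>b<length Z. sgn_pow b (\<omega> R (bg x (Z ! b) # y # remove_nth b Z)))
     - (\<Sum>b<length Z. sgn_pow b (\<omega> R (bg y (Z ! b) # x # remove_nth b Z)))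
     + (\<Sum>(a, b)\<in>PP (length Z). sgn_pow (a + b) (\<omega> R (x # y # bg (Z ! a) (Z ! b) # remove2 a b Z))))"
  proof -
    have "F 0 1 = - \<omega> R (bg x y # Z)" by (simp add: F_def remove2_def)
    moreover have "(\<Sum>a<b. F (Suc (Suc a)) (Suc (Suc b))) = (\<Sum>a<b. sgn_pow (a + b) (\<omega> R (x # y # bg (Z ! a) (Z ! b) # remove2 a b Z)))"
      if "b < length Z" for b
    proof (rule sum.cong)
      fix a assume "a \<in> {..<b}"
      then have ab: "a < b" by simp
      have lr: "length (remove2 a b Z) + 3 = r" using ab that lz by (simp add: remove2_def)
      show "F (Suc (Suc a)) (Suc (Suc b)) = sgn_pow (a + b) (\<omega> R (x # y # bg (Z ! a) (Z ! b) # remove2 a b Z))"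
        using W.move2[OF g lr] by (simp add: F_def remove2_def)
    qed simp
    ultimately show ?thesis
      by (simp add: F_def remove2_def sum.distrib sum_subtractf PS2 numeral_3_eq_3 add.assoc)
  qed
  finally show ?thesis unfolding delta_1_eq S1 F_def by (simp add: algebra_simps)
qed

context
  fixes \<Xi> :: "('g list \<times> 'h) list" and Z :: "'g list"
  assumes len: "length \<Xi> = q + 2" and gpX: "set \<Xi> \<subseteq> gp (p + 1)" and lz: "length Z = r - 1"
begin

definition "aa v = hd (fst (\<Xi> ! v))"
definition "RR u v = map tlx (nths \<Xi> (- {u, v}))"
definition "SS u = t_hat mu (tlx (\<Xi> ! u))"
definition "TT u = t_hat mu (\<Xi> ! u)"
definition "GG m n s = \<omega> (gp_bracket bg bh mu L (tlx (\<Xi> ! m)) (tlx (\<Xi> ! n)) # map tlx (nths \<Xi> (- {m, n, s}))) (aa s # Z)"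
definition "Psi1 u v = rho01 (TT u) (\<omega> (RR u v) (aa v # Z)) - (\<Sum>k<length Z. \<omega> (RR u v) (aa v # Z[k := L (TT u) (Z ! k)]))"
definition "Psi2 u v = rho01 (SS u) (\<omega> (RR u v) (aa v # Z)) - (\<omega> (RR u v) (L (SS u) (aa v) # Z) + (\<Sum>k<length Z. \<omega> (RR u v) (aa v # Z[k := L (SS u) (Z ! k)])))"

lemma RR_sym: "RR u v = RR v u" by (simp add: RR_def insert_commute)

lemma lenX: "i < q + 2 \<Longrightarrow> length (fst (\<Xi> ! i)) = Suc p"
  using nth_gp[OF gpX] len by simp

lemma good_RR': "u < q + 2 \<Longrightarrow> v < q + 2 \<Longrightarrow> u \<noteq> v \<Longrightarrow> good (RR u v)"
proof -
  assume a: "u < q + 2" "v < q + 2" "u \<noteq> v"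
  have "length (nths \<Xi> (- {u, v})) = q" using length_nths2[OF a(1,2,3)] len by simp
  moreover have "set (map tlx (nths \<Xi> (- {u, v}))) \<subseteq> gp p"
    using set_nths_gp[OF gpX] map_tlx_gp by (metis Suc_eq_plus1)
  ultimately show ?thesis by (simp add: good_def RR_def)
qed

lemma lz1: "length Z + 1 = r" using lz r2 by simp

lemma A1_eq: "(\<Sum>j<q + 2. sgn_pow j (rho_r L rho01 (t_hat mu (\<Xi> ! j)) (Delta \<omega> (remove_nth j \<Xi>)) Z))
   = (\<Sum>(m, n)\<in>PP (q + 2). sgn_pow (m + n) (Psi1 n m - Psi1 m n))"
proof -
  have "(\<Sum>j<q + 2. sgn_pow j (rho_r L rho01 (t_hat mu (\<Xi> ! j)) (Delta \<omega> (remove_nth j \<Xi>)) Z))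
     = (\<Sum>j<q + 2. sgn_pow j (\<Sum>i<q + 2 - 1. sgn_pow i (Psi1 j (sk j i))))"
  proof (rule sum.cong)
    fix j assume j: "j \<in> {..<q + 2}"
    have D: "Delta \<omega> (remove_nth j \<Xi>) Y = (\<Sum>i<q + 2 - 1. sgn_pow i (\<omega> (RR j (sk j i)) (aa (sk j i) # Y)))" for Y
      using Delta_rem0[OF len, of j \<omega> Y] j by (simp add: RR_def aa_def)
    show "sgn_pow j (rho_r L rho01 (t_hat mu (\<Xi> ! j)) (Delta \<omega> (remove_nth j \<Xi>)) Z) = sgn_pow j (\<Sum>i<q + 2 - 1. sgn_pow i (Psi1 j (sk j i)))"
      unfolding rho_r_def D Psi1_def TT_def[symmetric] rho_sum rho_sgn sgn_pow_diff sum_subtractf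
      by (simp add: sgn_pow_sum sum.swap[of _ "{..<length Z}"])
  qed simp
  also have "\<dots> = (\<Sum>(m, n)\<in>PP (q + 2). sgn_pow (m + n) (Psi1 n m - Psi1 m n))"
    by (rule DOUBLE')
  finally show ?thesis .
qed


definition "cc m n = bg (aa m) (aa n) + L (SS m) (aa n) - L (SS n) (aa m)"

lemma A2_pair: assumes mn: "m < n" "n < q + 2"
  shows "Delta \<omega> (gp_bracket bg bh mu L (\<Xi> ! m) (\<Xi> ! n) # remove2 m n \<Xi>) Z
    = \<omega> (RR m n) (cc m n # Z) + (\<Sum>s\<in>{..<q + 2} - {m, n}. sgn_pow (Suc (pos m (pos n s))) (GG m n s))"
proof -
  define E where "E = remove2 m n \<Xi>"
  define \<beta> where "\<beta> = gp_bracket bg bh mu L (\<Xi> ! m) (\<Xi> ! n)"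
  have lE: "length E = q" using mn len by (simp add: E_def remove2_def)
  have E0: "map tlx E = RR m n" using mn by (simp add: E_def RR_def remove2_nths)
  have hb: "hd (fst \<beta>) = cc m n"
    unfolding \<beta>_def cc_def aa_def SS_def using lenX mn by (intro br_hd) auto
  have tb: "tlx \<beta> = gp_bracket bg bh mu L (tlx (\<Xi> ! m)) (tlx (\<Xi> ! n))"
    unfolding \<beta>_def using lenX mn by (intro br_tl) auto
  have Ei: "E ! i = \<Xi> ! sk n (sk m i)" if "i < q" for i
  proof -
    have "Suc i < length (remove_nth n \<Xi>)" using that mn len by simp
    moreover have "Suc (sk m i) < length \<Xi>" using that mn len by (simp add: sk_def)
    ultimately show ?thesis by (simp add: E_def remove2_def nth_remove_nth)
  qed
  have Er: "remove_nth i E = nths \<Xi> (- {m, n, sk n (sk m i)})" for i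
    using mn by (simp add: E_def remove2_def rem3_nths insert_commute)
  have "Delta \<omega> (\<beta> # E) Z = \<omega> (RR m n) (cc m n # Z) + (\<Sum>i<q. sgn_pow (Suc i) (GG m n (sk n (sk m i))))"
    unfolding Delta_eq length_Cons lE sum.lessThan_Suc_shift
  proof (intro arg_cong2[where f="(+)"] sum.cong)
    show "sgn_pow 0 (\<omega> (map tlx (remove_nth 0 (\<beta> # E))) (hd (fst ((\<beta> # E) ! 0)) # Z)) = \<omega> (RR m n) (cc m n # Z)"
      using E0 hb by simp
  next
    fix i assume "i \<in> {..<q}"
    then have i: "i < q" by simp
    show "sgn_pow (Suc i) (\<omega> (map tlx (remove_nth (Suc i) (\<beta> # E))) (hd (fst ((\<beta> # E) ! Suc i)) # Z))
       = sgn_pow (Suc i) (GG m n (sk n (sk m i)))"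
      unfolding GG_def aa_def using tb Ei[OF i] Er[of i] by simp
  qed simp
  also have "(\<Sum>i<q. sgn_pow (Suc i) (GG m n (sk n (sk m i)))) = (\<Sum>i<q + 2 - 2. (\<lambda>s. sgn_pow (Suc (pos m (pos n s))) (GG m n s)) (sk n (sk m i)))"
    by simp
  also have "\<dots> = (\<Sum>s\<in>{..<q + 2} - {m, n}. sgn_pow (Suc (pos m (pos n s))) (GG m n s))"
    by (rule reidx2[OF mn])
  finally show ?thesis unfolding E_def \<beta>_def .
qed

lemma A2_eq: "(\<Sum>(m, n)\<in>PP (q + 2). sgn_pow (m + n) (Delta \<omega> (gp_bracket bg bh mu L (\<Xi> ! m) (\<Xi> ! n) # remove2 m n \<Xi>) Z))
   = (\<Sum>(m, n)\<in>PP (q + 2). sgn_pow (m + n) (\<omega> (RR m n) (cc m n # Z)))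
     + (\<Sum>(m, n)\<in>PP (q + 2). sgn_pow (m + n) (\<Sum>s\<in>{..<q + 2} - {m, n}. sgn_pow (Suc (pos m (pos n s))) (GG m n s)))"
  unfolding sum.distrib[symmetric]
  by (rule sum.cong) (auto simp: PP_def A2_pair)


lemma B_part1: assumes v: "v < q + 2"
  shows "(\<Sum>j<length (map tlx (remove_nth v \<Xi>)). sgn_pow j (rho_r L rho01 (t_hat mu (map tlx (remove_nth v \<Xi>) ! j))
            (\<omega> (remove_nth j (map tlx (remove_nth v \<Xi>)))) (aa v # Z)))
    = (\<Sum>i<q + 2 - 1. sgn_pow i (Psi2 (sk v i) v))"
proof -
  have lH: "length (map tlx (remove_nth v \<Xi>)) = q + 2 - 1" using v len by simp
  show ?thesis unfolding lH
  proof (rule sum.cong)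
    fix i assume "i \<in> {..<q + 2 - 1}"
    then have i: "i < q + 1" by simp
    have Hi: "map tlx (remove_nth v \<Xi>) ! i = tlx (\<Xi> ! sk v i)" using i v len by (simp add: nth_remove_nth)
    have Hr: "remove_nth i (map tlx (remove_nth v \<Xi>)) = RR (sk v i) v"
      by (simp add: remove_nth_map rem2_nths RR_def insert_commute)
    show "sgn_pow i (rho_r L rho01 (t_hat mu (map tlx (remove_nth v \<Xi>) ! i)) (\<omega> (remove_nth i (map tlx (remove_nth v \<Xi>)))) (aa v # Z))
       = sgn_pow i (Psi2 (sk v i) v)"
      unfolding Hi Hr rho_r_def Psi2_def SS_def[symmetric] length_Cons sum.lessThan_Suc_shift by simp
  qed simp
qed

lemma B_part2: assumes v: "v < q + 2"
  shows "(\<Sum>(m, n)\<in>PP (length (map tlx (remove_nth v \<Xi>))). sgn_pow (m + n) (\<omega> (gp_bracket bg bh mu L (map tlx (remove_nth v \<Xi>) ! m) (map tlx (remove_nth v \<Xi>) ! n) # remove2 m n (map tlx (remove_nth v \<Xi>))) (aa v # Z)))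
    = (\<Sum>(m, n)\<in>{(m, n)\<in>PP (q + 2). m \<noteq> v \<and> n \<noteq> v}. sgn_pow (pos v m + pos v n) (GG m n v))"
proof -
  have lH: "length (map tlx (remove_nth v \<Xi>)) = q + 2 - 1" using v len by simp
  have "(\<Sum>(m, n)\<in>PP (q + 2 - 1). sgn_pow (m + n) (\<omega> (gp_bracket bg bh mu L (map tlx (remove_nth v \<Xi>) ! m) (map tlx (remove_nth v \<Xi>) ! n) # remove2 m n (map tlx (remove_nth v \<Xi>))) (aa v # Z)))
     = (\<Sum>(m, n)\<in>PP (q + 2 - 1). (\<lambda>m n. sgn_pow (pos v m + pos v n) (GG m n v)) (sk v m) (sk v n))"
  proof (rule sum.cong)
    fix x assume "x \<in> PP (q + 2 - 1)"
    then obtain m n where x: "x = (m, n)" "m < n" "n < q + 1" by (auto simp: PP_def)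
    have Hm: "map tlx (remove_nth v \<Xi>) ! m = tlx (\<Xi> ! sk v m)" using x v len by (simp add: nth_remove_nth)
    have Hn: "map tlx (remove_nth v \<Xi>) ! n = tlx (\<Xi> ! sk v n)" using x v len by (simp add: nth_remove_nth)
    have Hr: "remove2 m n (map tlx (remove_nth v \<Xi>)) = map tlx (nths \<Xi> (- {sk v m, sk v n, v}))"
      using x by (simp add: remove2_def remove_nth_map rem3_nths insert_commute)
    show "(case x of (m, n) \<Rightarrow> sgn_pow (m + n) (\<omega> (gp_bracket bg bh mu L (map tlx (remove_nth v \<Xi>) ! m) (map tlx (remove_nth v \<Xi>) ! n) # remove2 m n (map tlx (remove_nth v \<Xi>))) (aa v # Z)))
       = (case x of (m, n) \<Rightarrow> (\<lambda>m n. sgn_pow (pos v m + pos v n) (GG m n v)) (sk v m) (sk v n))"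
      unfolding x(1) prod.case Hm Hn Hr GG_def by simp
  qed simp
  also have "\<dots> = (\<Sum>(m, n)\<in>{(m, n)\<in>PP (q + 2). m \<noteq> v \<and> n \<noteq> v}. sgn_pow (pos v m + pos v n) (GG m n v))"
    by (rule reidxP[OF v])
  finally show ?thesis unfolding lH .
qed

lemma B_eq: "Delta (delta_r bg bh mu L rho01 \<omega>) \<Xi> Z
   = (\<Sum>(m, n)\<in>PP (q + 2). sgn_pow (m + n) (Psi2 m n - Psi2 n m))
     + (\<Sum>(m, n)\<in>PP (q + 2). \<Sum>v\<in>{..<q + 2} - {m, n}. sgn_pow v (sgn_pow (pos v m + pos v n) (GG m n v)))"
proof -
  have "Delta (delta_r bg bh mu L rho01 \<omega>) \<Xi> Z
     = (\<Sum>v<q + 2. sgn_pow v (\<Sum>i<q + 2 - 1. sgn_pow i (Psi2 (sk v i) v)))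
       + (\<Sum>v<q + 2. sgn_pow v (\<Sum>(m, n)\<in>{(m, n)\<in>PP (q + 2). m \<noteq> v \<and> n \<noteq> v}. sgn_pow (pos v m + pos v n) (GG m n v)))"
    unfolding Delta_eq len sum.distrib[symmetric] sgn_pow_add[symmetric] aa_def[symmetric]
  proof (rule sum.cong)
    fix v assume "v \<in> {..<q + 2}"
    then have v: "v < q + 2" by simp
    show "sgn_pow v (delta_r bg bh mu L rho01 \<omega> (map tlx (remove_nth v \<Xi>)) (aa v # Z))
      = sgn_pow v ((\<Sum>i<q + 2 - 1. sgn_pow i (Psi2 (sk v i) v)) + (\<Sum>(m, n)\<in>{(m, n)\<in>PP (q + 2). m \<noteq> v \<and> n \<noteq> v}. sgn_pow (pos v m + pos v n) (GG m n v)))"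
      unfolding delta_r_eq B_part1[OF v] B_part2[OF v] ..
  qed simp
  also have "(\<Sum>v<q + 2. sgn_pow v (\<Sum>i<q + 2 - 1. sgn_pow i (Psi2 (sk v i) v)))
     = (\<Sum>(m, n)\<in>PP (q + 2). sgn_pow (m + n) (Psi2 m n - Psi2 n m))"
    by (rule DOUBLE'[where F="\<lambda>j w. Psi2 w j"])
  also have "(\<Sum>v<q + 2. sgn_pow v (\<Sum>(m, n)\<in>{(m, n)\<in>PP (q + 2). m \<noteq> v \<and> n \<noteq> v}. sgn_pow (pos v m + pos v n) (GG m n v)))
     = (\<Sum>(m, n)\<in>PP (q + 2). \<Sum>v\<in>{..<q + 2} - {m, n}. sgn_pow v (sgn_pow (pos v m + pos v n) (GG m n v)))"
    unfolding sgn_pow_sum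
    using swapT[where N="q + 2" and G="\<lambda>v m n. sgn_pow v (sgn_pow (pos v m + pos v n) (GG m n v))"]
    by (simp add: split_def)
  finally show ?thesis .
qed


lemma Psi_diff: assumes uv: "u < q + 2" "v < q + 2" "u \<noteq> v"
  shows "Psi1 u v - Psi2 u v = rho01 (mu (aa u)) (\<omega> (RR u v) (aa v # Z))
     + (\<Sum>k<length Z. sgn_pow k (\<omega> (RR u v) (bg (aa u) (Z ! k) # aa v # remove_nth k Z)))
     + \<omega> (RR u v) (L (SS u) (aa v) # Z)"
proof -
  have g: "good (RR u v)" using good_RR'[OF uv] .
  have T: "TT u = SS u + mu (aa u)" unfolding TT_def SS_def aa_def using t_hat_split lenX[OF uv(1)] by blast
  have sumk: "(\<Sum>k<length Z. \<omega> (RR u v) (aa v # Z[k := L (TT u) (Z ! k)]))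
     = (\<Sum>k<length Z. \<omega> (RR u v) (aa v # Z[k := L (SS u) (Z ! k)])) + (\<Sum>k<length Z. \<omega> (RR u v) (aa v # Z[k := bg (aa u) (Z ! k)]))"
    unfolding sum.distrib[symmetric] T Ladd Lmu by (rule sum.cong) (simp_all add: slotk[OF g lz1])
  have mv: "(\<Sum>k<length Z. \<omega> (RR u v) (aa v # Z[k := bg (aa u) (Z ! k)]))
     = - (\<Sum>k<length Z. sgn_pow k (\<omega> (RR u v) (bg (aa u) (Z ! k) # aa v # remove_nth k Z)))"
    unfolding sum_negf[symmetric] by (rule sum.cong) (simp_all add: W.moveZ[OF g lz1])
  show ?thesis unfolding Psi1_def Psi2_def sumk mv unfolding T Radd1 by (simp add: algebra_simps)
qed

lemma Delta2_R: "Delta2 w \<Xi> Y = (\<Sum>(m, n)\<in>PP (q + 2). sgn_pow (m + n) (w (RR m n) (aa m # aa n # Y)))"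
  unfolding Delta2_eq len
  by (rule sum.cong) (auto simp: PP_def RR_def aa_def remove2_nths)

definition "K1 m n = (\<Sum>k<length Z. sgn_pow k (rho01 (mu (Z ! k)) (\<omega> (RR m n) (aa m # aa n # remove_nth k Z))))"
definition "K2 m n = (\<Sum>(a, b)\<in>PP (length Z). sgn_pow (a + b) (\<omega> (RR m n) (aa m # aa n # bg (Z ! a) (Z ! b) # remove2 a b Z)))"

lemma C_eq: "delta_1 bg mu rho01 (Delta2 \<omega>) \<Xi> Z = (\<Sum>(m, n)\<in>PP (q + 2). sgn_pow (m + n) (K1 m n + K2 m n))"
proof -
  have C1: "(\<Sum>k<length Z. sgn_pow k (rho01 (mu (Z ! k)) (Delta2 \<omega> \<Xi> (remove_nth k Z))))
     = (\<Sum>x\<in>PP (q + 2). sgn_pow (fst x + snd x) (K1 (fst x) (snd x)))"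
    unfolding Delta2_R K1_def split_def rho_sum rho_sgn sgn_pow_sum
    by (subst sum.swap) (simp add: sgn_comm)
  have C2: "(\<Sum>(a, b)\<in>PP (length Z). sgn_pow (a + b) (Delta2 \<omega> \<Xi> (bg (Z ! a) (Z ! b) # remove2 a b Z)))
     = (\<Sum>x\<in>PP (q + 2). sgn_pow (fst x + snd x) (K2 (fst x) (snd x)))"
    unfolding Delta2_R K2_def split_def sgn_pow_sum
    by (subst sum.swap) (simp add: sgn_comm)
  show ?thesis unfolding delta_1_eq C1 C2 sum.distrib[symmetric] by (simp add: split_def)
qed

lemma pair_eq: assumes mn: "m < n" "n < q + 2"
  shows "(Psi1 n m - Psi1 m n) + \<omega> (RR m n) (cc m n # Z) + (Psi2 m n - Psi2 n m)
     = K1 m n + K2 m n - delta_1 bg mu rho01 \<omega> (RR m n) (aa m # aa n # Z)"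
proof -
  have g: "good (RR m n)" using good_RR'[of m n] mn by simp
  have d1: "Psi1 n m - Psi2 n m = rho01 (mu (aa n)) (\<omega> (RR m n) (aa m # Z))
     + (\<Sum>k<length Z. sgn_pow k (\<omega> (RR m n) (bg (aa n) (Z ! k) # aa m # remove_nth k Z)))
     + \<omega> (RR m n) (L (SS n) (aa m) # Z)"
    using Psi_diff[of n m] mn RR_sym[of n m] by simp
  have d2: "Psi1 m n - Psi2 m n = rho01 (mu (aa m)) (\<omega> (RR m n) (aa n # Z))
     + (\<Sum>k<length Z. sgn_pow k (\<omega> (RR m n) (bg (aa m) (Z ! k) # aa n # remove_nth k Z)))
     + \<omega> (RR m n) (L (SS m) (aa n) # Z)"
    using Psi_diff[of m n] mn by simp
  have c: "\<omega> (RR m n) (cc m n # Z) = \<omega> (RR m n) (bg (aa m) (aa n) # Z) + \<omega> (RR m n) (L (SS m) (aa n) # Z) - \<omega> (RR m n) (L (SS n) (aa m) # Z)"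
    unfolding cc_def using W.addP[OF g, of "[]" Z] W.diffP[OF g, of "[]" Z] lz1 by simp
  have "(Psi1 n m - Psi1 m n) + \<omega> (RR m n) (cc m n # Z) + (Psi2 m n - Psi2 n m)
     = (Psi1 n m - Psi2 n m) - (Psi1 m n - Psi2 m n) + \<omega> (RR m n) (cc m n # Z)" by (simp add: algebra_simps)
  also have "\<dots> = K1 m n + K2 m n - delta_1 bg mu rho01 \<omega> (RR m n) (aa m # aa n # Z)"
    unfolding d1 d2 c delta1_pair[OF g lz1] K1_def K2_def by (simp add: algebra_simps)
  finally show ?thesis .
qed

theorem first_identity:
  "delta_r bg bh mu L rho01 (Delta \<omega>) \<Xi> Z + Delta (delta_r bg bh mu L rho01 \<omega>) \<Xi> Z
   = delta_1 bg mu rho01 (Delta2 \<omega>) \<Xi> Z - Delta2 (delta_1 bg mu rho01 \<omega>) \<Xi> Z"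
proof -
  have L: "delta_r bg bh mu L rho01 (Delta \<omega>) \<Xi> Z + Delta (delta_r bg bh mu L rho01 \<omega>) \<Xi> Z
     = (\<Sum>(m, n)\<in>PP (q + 2). sgn_pow (m + n) ((Psi1 n m - Psi1 m n) + \<omega> (RR m n) (cc m n # Z) + (Psi2 m n - Psi2 n m)))"
  proof -
    have "delta_r bg bh mu L rho01 (Delta \<omega>) \<Xi> Z + Delta (delta_r bg bh mu L rho01 \<omega>) \<Xi> Z
      = (\<Sum>(m, n)\<in>PP (q + 2). sgn_pow (m + n) (Psi1 n m - Psi1 m n))
        + (\<Sum>(m, n)\<in>PP (q + 2). sgn_pow (m + n) (\<omega> (RR m n) (cc m n # Z)))
        + (\<Sum>(m, n)\<in>PP (q + 2). sgn_pow (m + n) (Psi2 m n - Psi2 n m))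
        + ((\<Sum>(m, n)\<in>PP (q + 2). sgn_pow (m + n) (\<Sum>s\<in>{..<q + 2} - {m, n}. sgn_pow (Suc (pos m (pos n s))) (GG m n s)))
           + (\<Sum>(m, n)\<in>PP (q + 2). \<Sum>v\<in>{..<q + 2} - {m, n}. sgn_pow v (sgn_pow (pos v m + pos v n) (GG m n v))))"
      unfolding delta_r_eq len A1_eq A2_eq B_eq by (simp add: algebra_simps)
    also have "\<dots> = (\<Sum>(m, n)\<in>PP (q + 2). sgn_pow (m + n) ((Psi1 n m - Psi1 m n) + \<omega> (RR m n) (cc m n # Z) + (Psi2 m n - Psi2 n m)))"
      unfolding T_cancel by (simp add: sum.distrib[symmetric] split_def)
    finally show ?thesis .
  qed
  have R: "delta_1 bg mu rho01 (Delta2 \<omega>) \<Xi> Z - Delta2 (delta_1 bg mu rho01 \<omega>) \<Xi> Z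
     = (\<Sum>(m, n)\<in>PP (q + 2). sgn_pow (m + n) (K1 m n + K2 m n - delta_1 bg mu rho01 \<omega> (RR m n) (aa m # aa n # Z)))"
    unfolding C_eq Delta2_R[of "delta_1 bg mu rho01 \<omega>"] sum_subtractf[symmetric] by (simp add: split_def)
  show ?thesis unfolding L R
  proof (rule sum.cong)
    fix x assume "x \<in> PP (q + 2)"
    then obtain m n where x: "x = (m, n)" "m < n" "n < q + 2" by (auto simp: PP_def)
    show "(case x of (m, n) \<Rightarrow> sgn_pow (m + n) ((Psi1 n m - Psi1 m n) + \<omega> (RR m n) (cc m n # Z) + (Psi2 m n - Psi2 n m)))
      = (case x of (m, n) \<Rightarrow> sgn_pow (m + n) (K1 m n + K2 m n - delta_1 bg mu rho01 \<omega> (RR m n) (aa m # aa n # Z)))"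
      unfolding x(1) prod.case pair_eq[OF x(2,3)] ..
  qed simp
qed

end
end

theorem mainTheorem14:
  fixes sg :: "'k::field \<Rightarrow> 'g::ab_group_add \<Rightarrow> 'g" and sh :: "'k \<Rightarrow> 'h::ab_group_add \<Rightarrow> 'h"
    and sv :: "'k \<Rightarrow> 'v::ab_group_add \<Rightarrow> 'v" and sw :: "'k \<Rightarrow> 'w::ab_group_add \<Rightarrow> 'w"
    and bg :: "'g \<Rightarrow> 'g \<Rightarrow> 'g" and bh :: "'h \<Rightarrow> 'h \<Rightarrow> 'h"
    and mu :: "'g \<Rightarrow> 'h" and L :: "'h \<Rightarrow> 'g \<Rightarrow> 'g"
    and phi :: "'w \<Rightarrow> 'v" and rho01 :: "'h \<Rightarrow> 'w \<Rightarrow> 'w" and rho00 :: "'h \<Rightarrow> 'v \<Rightarrow> 'v"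
    and rho1 :: "'g \<Rightarrow> 'v \<Rightarrow> 'w"
    and \<omega> :: "('g list \<times> 'h) list \<Rightarrow> 'g list \<Rightarrow> 'w"
    and p q r :: nat
  assumes "crossed_module sg sh bg bh mu L"
    and "two_representation sg sh sv sw bg bh mu L phi rho01 rho00 rho1"
    and "r > 2"
    and "cochain sg sh sw p q r \<omega>"
  shows "(\<forall>\<Xi> Z. length \<Xi> = q + 2 \<and> set \<Xi> \<subseteq> gp (p + 1) \<and> length Z = r - 1 \<longrightarrow>
            delta_r bg bh mu L rho01 (Delta \<omega>) \<Xi> Z + Delta (delta_r bg bh mu L rho01 \<omega>) \<Xi> Z
            = delta_1 bg mu rho01 (Delta2 \<omega>) \<Xi> Z - Delta2 (delta_1 bg mu rho01 \<omega>) \<Xi> Z)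
       \<and> (\<forall>\<Xi> Z. length \<Xi> = q + 2 \<and> set \<Xi> \<subseteq> gp (p + 2) \<and> length Z = r - 2 \<longrightarrow>
            Delta (Delta \<omega>) \<Xi> Z
            = - (Delta2 (bd mu p \<omega>) \<Xi> Z + bd mu (p + 1) (Delta2 \<omega>) \<Xi> Z))"
proof -
  have cm: "crossed_module sg sh bg bh mu L" and tr: "two_representation sg sh sv sw bg bh mu L phi rho01 rho00 rho1"
    and r2: "r > 2" and co: "cochain sg sh sw p q r \<omega>" using assms by auto
  have Ladd: "L (y + y') x = L y x + L y' x" for y y' x
    using cm unfolding crossed_module_def lin_family_def by blast
  have Lmu: "L (mu x0) x1 = bg x0 x1" for x0 x1
    using cm unfolding crossed_module_def by blast
  have Radd1: "rho01 (y + y') w = rho01 y w + rho01 y' w" for y y' w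
    using tr unfolding two_representation_def lin_family_def by simp
  have Radd2: "rho01 y (w + w') = rho01 y w + rho01 y w'" for y w w'
  proof -
    have "Vector_Spaces.linear sw sw (rho01 y)"
      using tr unfolding two_representation_def lin_family_def by simp
    then show ?thesis unfolding linear_iff by blast
  qed
  have am: "alt_multilinear sg (+) UNIV sw r (\<omega> \<Xi>)" if "length \<Xi> = q" "set \<Xi> \<subseteq> gp p" for \<Xi>
    using co that unfolding cochain_def by blast
  have Wadd: "\<omega> \<Xi> (l[i := a + b]) = \<omega> \<Xi> (l[i := a]) + \<omega> \<Xi> (l[i := b])"
    if "length \<Xi> = q" "set \<Xi> \<subseteq> gp p" "length l = r" "i < r" for \<Xi> l i a b
    using am[OF that(1,2)] that(3,4) unfolding alt_multilinear_def by blast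
  have Walt: "\<omega> \<Xi> l = 0"
    if "length \<Xi> = q" "set \<Xi> \<subseteq> gp p" "length l = r" "i < r" "j < r" "i \<noteq> j" "l ! i = l ! j" for \<Xi> l i j
    using am[OF that(1,2)] that(3-7) unfolding alt_multilinear_def by blast
  interpret C: ctx bg bh mu L rho01 \<omega> p q r
    by unfold_locales (fact Ladd Lmu Radd1 Radd2 Wadd Walt r2)+
  show ?thesis
    using C.first_identity C.second by blast
qed

end
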